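(* Let $\epsilon\ge0$, $\delta\in[0,1]$ and let $$C_{\epsilon,\delta}=\begin{bmatrix}\delta & \frac{(1-\delta)e^\epsilon}{1+e^\epsilon} & \frac{1-\delta}{1+e^\epsilon} & 0\\ 0 & \frac{1-\delta}{1+e^\epsilon} & \frac{(1-\delta)e^\epsilon}{1+e^\epsilon} & \delta\end{bmatrix}.$$ Then $\mathcal{C}(f_{\epsilon,\delta}) \equiv C_{\epsilon,\delta}$, where $f_{\epsilon,\delta}(\alpha)=\max\{0,\ 1-\delta-e^\epsilon\alpha,\ e^{-\epsilon}(1-\delta-\alpha)\}$, and for every $M\in\mathbb{C}_2$: $M$ satisfies $(\epsilon,\delta)$-DP if and only if $C_{\epsilon,\delta}\sqsubseteq M$.
   Context: Channels: fix two inputs $D_0, D_1$. A two-row channel $C$ with output set $\mathcal{Y}$ is a pair of probability distributions $C_{D_0}, C_{D_1}$ on $\mathcal{Y}$ (its rows); in the discrete case it is a $2\times|\mathcal{Y}|$ matrix with nonnegative entries whose rows sum to $1$; in general the rows may be probability measures on a common measurable output space. $\mathbb{C}_2$ is the set of all two-row channels. A channel $W$ is a row-stochastic matrix (Markov kernel), and $C\cdot W$ denotes composition. Refinement: $C \sqsubseteq C'$ iff there is a channel $W$ with $C\cdot W = C'$; $C\equiv C'$ iff both $C\sqsubseteq C'$ and $C'\sqsubseteq C$; $\min$ is greatest lower bound in $(\mathbb{C}_2,\sqsubseteq)$. For $f:[0,1]\to[0,1]$ convex with $f(\alpha)\le 1-\alpha$, and $\alpha\in[0,1]$, $f^\alpha$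 is the $2\times2$ channel with rows $(1-\alpha,\ \alpha)$ and $(f(\alpha),\ 1-f(\alpha))$, and $\mathcal{C}(f):=\min_{\alpha\in[0,1]}f^\alpha$. $M\in\mathbb{C}_2$ with output set $\mathcal{Y}$ satisfies $(\epsilon,\delta)$-DP iff for every (measurable) $S\subseteq\mathcal{Y}$: $M_{D_0}(S)\le e^\epsilon M_{D_1}(S)+\delta$ and $M_{D_1}(S)\le e^\epsilon M_{D_0}(S)+\delta$. *)

theory Defs
  imports "HOL-Probability.Probability"
begin

text \<open>A two-row channel: a pair of probability measures (rows for inputs D0, D1)
  on a common measurable output space.\<close>
type_synonym 'a channel = "'a measure \<times> 'a measure"

definition is_channel :: "'a channel \<Rightarrow> bool" where
  "is_channel C \<longleftrightarrow> prob_space (fst C) \<and> prob_space (snd C) \<and> sets (fst C) = sets (snd C)"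

text \<open>Refinement: C refines to C' iff some Markov kernel W (measurable map from the
  output space of C into probability measures on the output space of C') satisfies
  C \<cdot> W = C', i.e. each row of C' is the composition of the corresponding row of C with W.\<close>
definition refines :: "'a channel \<Rightarrow> 'b channel \<Rightarrow> bool" (infix "\<sqsubseteq>\<^sub>c" 50) where
  "C \<sqsubseteq>\<^sub>c C' \<longleftrightarrow>
     (\<exists>W. W \<in> measurable (fst C) (prob_algebra (fst C')) \<and>
          bind (fst C) W = fst C' \<and> bind (snd C) W = snd C')"

definition chan_equiv :: "'a channel \<Rightarrow> 'b channel \<Rightarrow> bool" where
  "chan_equiv C C' \<longleftrightarrow> C \<sqsubseteq>\<^sub>c C' \<and> C' \<sqsubseteq>\<^sub>c C"

text \<open>A finite row (y_0,...,y_{n-1}) as a measure on outputs nat (entries beyond n are 0).\<close>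
definition fin_row :: "real list \<Rightarrow> nat measure" where
  "fin_row xs = density (count_space UNIV) (\<lambda>i. ennreal (if i < length xs then xs ! i else 0))"

definition mat_channel :: "real list \<Rightarrow> real list \<Rightarrow> nat channel" where
  "mat_channel r0 r1 = (fin_row r0, fin_row r1)"

definition f_chan :: "(real \<Rightarrow> real) \<Rightarrow> real \<Rightarrow> nat channel" where
  "f_chan f \<alpha> = mat_channel [1 - \<alpha>, \<alpha>] [f \<alpha>, 1 - f \<alpha>]"

definition f_eps_delta :: "real \<Rightarrow> real \<Rightarrow> real \<Rightarrow> real" where
  "f_eps_delta \<epsilon> \<delta> \<alpha> = max 0 (max (1 - \<delta> - exp \<epsilon> * \<alpha>) (exp (- \<epsilon>) * (1 - \<delta> - \<alpha>)))"

definition C_eps_delta :: "real \<Rightarrow> real \<Rightarrow> nat channel" where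
  "C_eps_delta \<epsilon> \<delta> = mat_channel
     [\<delta>, (1 - \<delta>) * exp \<epsilon> / (1 + exp \<epsilon>), (1 - \<delta>) / (1 + exp \<epsilon>), 0]
     [0, (1 - \<delta>) / (1 + exp \<epsilon>), (1 - \<delta>) * exp \<epsilon> / (1 + exp \<epsilon>), \<delta>]"

definition DP :: "real \<Rightarrow> real \<Rightarrow> 'a channel \<Rightarrow> bool" where
  "DP \<epsilon> \<delta> M \<longleftrightarrow> (\<forall>S \<in> sets (fst M).
      measure (fst M) S \<le> exp \<epsilon> * measure (snd M) S + \<delta> \<and>
      measure (snd M) S \<le> exp \<epsilon> * measure (fst M) S + \<delta>)"

end

theory Submission
  imports Defs
begin

lemma sets_fin_row[simp]: "sets (fin_row xs) = UNIV"
  by (simp add: fin_row_def)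

lemma space_fin_row[simp]: "space (fin_row xs) = UNIV"
  by (simp add: fin_row_def)

lemma nn_integral_fin_row:
  "(\<integral>\<^sup>+ i. g i \<partial>fin_row xs) = (\<Sum>i<length xs. ennreal (xs!i) * g i)"
proof -
  have "(\<integral>\<^sup>+ i. g i \<partial>fin_row xs) =
     (\<integral>\<^sup>+ i. ennreal (if i < length xs then xs ! i else 0) * g i \<partial>count_space UNIV)"
    unfolding fin_row_def by (subst nn_integral_density) auto
  also have "\<dots> = (\<Sum>i\<in>{..<length xs}. ennreal (if i < length xs then xs ! i else 0) * g i)"
    by (rule nn_integral_count_space') auto
  finally show ?thesis by simp
qed

lemma emeasure_fin_row:
  "emeasure (fin_row xs) A = (\<Sum>i<length xs. ennreal (xs!i) * indicator A i)"
proof -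
  have "emeasure (fin_row xs) A = (\<integral>\<^sup>+ i. indicator A i \<partial>fin_row xs)"
    by (simp add: nn_integral_indicator)
  then show ?thesis by (simp add: nn_integral_fin_row)
qed

lemma prob_space_fin_row:
  assumes "\<And>i. i < length xs \<Longrightarrow> 0 \<le> xs!i" "sum_list xs = 1"
  shows "prob_space (fin_row xs)"
proof
  have "emeasure (fin_row xs) (space (fin_row xs)) = (\<Sum>i<length xs. ennreal (xs!i))"
    by (simp add: emeasure_fin_row)
  also have "\<dots> = ennreal (\<Sum>i<length xs. xs!i)"
    using assms(1) by (subst sum_ennreal) auto
  also have "(\<Sum>i<length xs. xs!i) = sum_list xs"
    by (simp add: sum_list_sum_nth atLeast0LessThan)
  finally show "emeasure (fin_row xs) (space (fin_row xs)) = 1" using assms(2) by simp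
qed

lemma kernel_from_fin_row:
  assumes K: "\<And>i. prob_space (K i)" "\<And>i. sets (K i) = sets N"
  shows "K \<in> fin_row xs \<rightarrow>\<^sub>M prob_algebra N"
proof (rule measurableI)
  fix x show "K x \<in> space (prob_algebra N)" using K by (simp add: space_prob_algebra)
qed simp

lemma emeasure_bind_fin_row:
  assumes K: "\<And>i. prob_space (K i)" "\<And>i. sets (K i) = sets N" and A: "A \<in> sets N"
  shows "emeasure (bind (fin_row xs) K) A = (\<Sum>i<length xs. ennreal (xs!i) * emeasure (K i) A)"
  by (subst emeasure_bind[where N=N])
     (auto simp: A nn_integral_fin_row intro!: measurable_prob_algebraD kernel_from_fin_row K)

lemma sets_bind_fin_row:
  assumes K: "\<And>i. prob_space (K i)" "\<And>i. sets (K i) = sets N"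
  shows "sets (bind (fin_row xs) K) = sets N"
  by (rule sets_bind) (auto simp: K)

lemma kernel_to_fin_row:
  assumes N: "prob_space N"
    and meas: "\<And>i. i < length ws \<Longrightarrow> ws!i \<in> borel_measurable N"
    and nn: "\<And>i x. i < length ws \<Longrightarrow> x \<in> space N \<Longrightarrow> 0 \<le> (ws!i) x"
    and s1: "\<And>x. x \<in> space N \<Longrightarrow> (\<Sum>i<length ws. (ws!i) x) = 1"
  shows "(\<lambda>x. fin_row (map (\<lambda>w. w x) ws)) \<in> N \<rightarrow>\<^sub>M prob_algebra (fin_row r)"
proof (rule measurable_prob_algebra_generated[where \<Omega>=UNIV and G=UNIV])
  show "sets (fin_row r) = sigma_sets UNIV UNIV"
    by (auto intro: sigma_sets.Basic)
  show "Int_stable UNIV" by (simp add: Int_stable_def)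
  show "UNIV \<subseteq> Pow UNIV" by simp
  fix a assume a: "a \<in> space N"
  show "prob_space (fin_row (map (\<lambda>w. w a) ws))"
  proof (rule prob_space_fin_row)
    show "\<And>i. i < length (map (\<lambda>w. w a) ws) \<Longrightarrow> 0 \<le> map (\<lambda>w. w a) ws ! i"
      using nn a by simp
    have "sum_list (map (\<lambda>w. w a) ws) = (\<Sum>i<length ws. (ws!i) a)"
      by (simp add: sum_list_sum_nth atLeast0LessThan)
    then show "sum_list (map (\<lambda>w. w a) ws) = 1" using s1 a by simp
  qed
  show "sets (fin_row (map (\<lambda>w. w a) ws)) = sets (fin_row r)" by simp
next
  fix A :: "nat set"
  have "(\<lambda>a. \<Sum>i<length ws. ennreal ((ws!i) a) * indicator A i) \<in> borel_measurable N"
    using meas by (intro borel_measurable_sum borel_measurable_times_ennreal) auto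
  then show "(\<lambda>a. emeasure (fin_row (map (\<lambda>w. w a) ws)) A) \<in> borel_measurable N"
    by (simp add: emeasure_fin_row)
qed

lemma bind_to_fin_row:
  assumes N: "prob_space N"
    and meas: "\<And>i. i < length ws \<Longrightarrow> ws!i \<in> borel_measurable N"
    and nn: "\<And>i x. i < length ws \<Longrightarrow> x \<in> space N \<Longrightarrow> 0 \<le> (ws!i) x"
    and le1: "\<And>i x. i < length ws \<Longrightarrow> x \<in> space N \<Longrightarrow> (ws!i) x \<le> 1"
    and s1: "\<And>x. x \<in> space N \<Longrightarrow> (\<Sum>i<length ws. (ws!i) x) = 1"
  shows "bind N (\<lambda>x. fin_row (map (\<lambda>w. w x) ws)) = fin_row (map (\<lambda>w. integral\<^sup>L N w) ws)"
proof -
  interpret N: prob_space N by fact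
  have Km: "(\<lambda>x. fin_row (map (\<lambda>w. w x) ws)) \<in> N \<rightarrow>\<^sub>M prob_algebra (fin_row [])"
    by (rule kernel_to_fin_row[OF N meas nn s1])
  have ne: "space N \<noteq> {}" by (rule N.not_empty)
  have int: "integrable N (ws!i)" if "i < length ws" for i
    by (rule N.integrable_const_bound[where B=1]) (use that meas nn le1 in auto)
  show ?thesis
  proof (rule measure_eqI)
    show "sets (bind N (\<lambda>x. fin_row (map (\<lambda>w. w x) ws))) = sets (fin_row (map (\<lambda>w. integral\<^sup>L N w) ws))"
      by (subst sets_bind[where N="fin_row []"]) (auto simp: ne)
  next
    fix A assume "A \<in> sets (bind N (\<lambda>x. fin_row (map (\<lambda>w. w x) ws)))"
    have "emeasure (bind N (\<lambda>x. fin_row (map (\<lambda>w. w x) ws))) A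
        = (\<integral>\<^sup>+ x. (\<Sum>i<length ws. ennreal ((ws!i) x) * indicator A i) \<partial>N)"
      by (subst emeasure_bind[where N="fin_row []"])
         (auto simp: ne emeasure_fin_row intro!: measurable_prob_algebraD Km)
    also have "\<dots> = (\<Sum>i<length ws. (\<integral>\<^sup>+ x. ennreal ((ws!i) x) \<partial>N) * indicator A i)"
      using meas by (subst nn_integral_sum) (auto simp: nn_integral_multc)
    also have "\<dots> = (\<Sum>i<length ws. ennreal (integral\<^sup>L N (ws!i)) * indicator A i)"
      using int nn by (intro sum.cong refl arg_cong2[where f=times] nn_integral_eq_integral) auto
    also have "\<dots> = emeasure (fin_row (map (\<lambda>w. integral\<^sup>L N w) ws)) A"
      by (simp add: emeasure_fin_row)
    finally show "emeasure (bind N (\<lambda>x. fin_row (map (\<lambda>w. w x) ws))) A = emeasure (fin_row (map (\<lambda>w. integral\<^sup>L N w) ws)) A" .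
  qed
qed

lemma measure_fin_row:
  assumes "\<And>i. i < length xs \<Longrightarrow> 0 \<le> xs!i"
  shows "measure (fin_row xs) A = (\<Sum>i<length xs. xs!i * indicator A i)"
proof -
  have "emeasure (fin_row xs) A = (\<Sum>i<length xs. ennreal (xs!i * indicator A i))"
    unfolding emeasure_fin_row using assms
    by (intro sum.cong refl) (auto simp: indicator_def)
  also have "\<dots> = ennreal (\<Sum>i<length xs. xs!i * indicator A i)"
    using assms by (subst sum_ennreal) auto
  moreover have "0 \<le> (\<Sum>i<length xs. xs!i * indicator A i)"
    using assms by (intro sum_nonneg) auto
  ultimately show ?thesis unfolding measure_def by (metis enn2real_ennreal)
qed

lemma channel_densities:
  assumes "is_channel M"
  obtains \<mu> p q where "prob_space \<mu>" "sets \<mu> = sets (fst M)"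
    "p \<in> borel_measurable \<mu>" "q \<in> borel_measurable \<mu>"
    "\<And>x. 0 \<le> p x" "\<And>x. 0 \<le> q x"
    "fst M = density \<mu> (\<lambda>x. ennreal (p x))" "snd M = density \<mu> (\<lambda>x. ennreal (q x))"
proof -
  define P where "P = fst M"
  define Q where "Q = snd M"
  have P: "prob_space P" and Q: "prob_space Q" and PQ: "sets Q = sets P"
    using assms by (auto simp: is_channel_def P_def Q_def)
  define K where "K = (\<lambda>i::nat. if i = 0 then P else Q)"
  have K: "prob_space (K i)" "sets (K i) = sets P" for i
    using P Q PQ by (auto simp: K_def)
  define \<mu> where "\<mu> = bind (fin_row [1/2, 1/2]) K"
  have sets\<mu>: "sets \<mu> = sets P" unfolding \<mu>_def by (rule sets_bind_fin_row[OF K])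
  have space\<mu>: "space \<mu> = space P" using sets\<mu> by (rule sets_eq_imp_space_eq)
  have spQ: "space Q = space P" using PQ by (rule sets_eq_imp_space_eq)
  have em: "emeasure \<mu> A = ennreal (1/2) * emeasure P A + ennreal (1/2) * emeasure Q A"
    if "A \<in> sets P" for A
    unfolding \<mu>_def by (subst emeasure_bind_fin_row[OF K that]) (simp add: K_def numeral_eq_Suc)
  have "prob_space \<mu>"
  proof
    have "emeasure \<mu> (space \<mu>) = ennreal (1/2) * 1 + ennreal (1/2) * 1"
      using em[of "space P"] prob_space.emeasure_space_1[OF P] prob_space.emeasure_space_1[OF Q]
      by (simp add: space\<mu> spQ)
    also have "\<dots> = ennreal (1/2 + 1/2)" by (simp only: mult_1_right) (rule ennreal_plus[symmetric]; simp)
    also have "\<dots> = 1" by simp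
    finally show "emeasure \<mu> (space \<mu>) = 1" .
  qed
  then interpret mu: prob_space \<mu> .
  have nul: "A \<in> null_sets P \<and> A \<in> null_sets Q" if "A \<in> null_sets \<mu>" for A
  proof -
    have A: "A \<in> sets P" "emeasure \<mu> A = 0" using that sets\<mu> by (auto dest: null_setsD1 null_setsD2)
    then have "ennreal (1/2) * emeasure P A + ennreal (1/2) * emeasure Q A = 0" using em by simp
    then have "emeasure P A = 0" "emeasure Q A = 0" by (auto simp del: ennreal_half)
    then show ?thesis using A PQ by (auto intro: null_setsI)
  qed
  have acP: "absolutely_continuous \<mu> P" and acQ: "absolutely_continuous \<mu> Q"
    unfolding absolutely_continuous_def using nul by auto
  define pe where "pe = RN_deriv \<mu> P"
  define qe where "qe = RN_deriv \<mu> Q"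
  have dP: "density \<mu> pe = P" unfolding pe_def by (rule mu.density_RN_deriv[OF acP]) (simp add: sets\<mu>)
  have dQ: "density \<mu> qe = Q" unfolding qe_def by (rule mu.density_RN_deriv[OF acQ]) (simp add: sets\<mu> PQ)
  have fP: "AE x in \<mu>. pe x \<noteq> \<infinity>" unfolding pe_def
    by (rule mu.RN_deriv_finite[OF _ acP]) (use P prob_space_imp_sigma_finite in \<open>auto simp: sets\<mu>\<close>)
  have fQ: "AE x in \<mu>. qe x \<noteq> \<infinity>" unfolding qe_def
    by (rule mu.RN_deriv_finite[OF _ acQ]) (use Q prob_space_imp_sigma_finite in \<open>auto simp: sets\<mu> PQ\<close>)
  have pem: "pe \<in> borel_measurable \<mu>" "qe \<in> borel_measurable \<mu>" unfolding pe_def qe_def by auto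
  have "density \<mu> (\<lambda>x. ennreal (enn2real (pe x))) = density \<mu> pe"
    using fP pem by (intro density_cong) (auto simp: ennreal_enn2real_if)
  moreover have "density \<mu> (\<lambda>x. ennreal (enn2real (qe x))) = density \<mu> qe"
    using fQ pem by (intro density_cong) (auto simp: ennreal_enn2real_if)
  ultimately show ?thesis
  proof (intro that[of \<mu> "\<lambda>x. enn2real (pe x)" "\<lambda>x. enn2real (qe x)"])
    show "prob_space \<mu>" by fact
    show "sets \<mu> = sets (fst M)" using sets\<mu> by (simp add: P_def)
    show "(\<lambda>x. enn2real (pe x)) \<in> borel_measurable \<mu>" "(\<lambda>x. enn2real (qe x)) \<in> borel_measurable \<mu>"
      using pem by measurable
  qed (use dP dQ in \<open>simp_all add: P_def Q_def\<close>)
qed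

lemma decomp_aux:
  fixes \<mu> :: "'a measure" and p q :: "'a \<Rightarrow> real" and k \<delta> :: real
  assumes \<mu>: "prob_space \<mu>"
    and pm[measurable]: "p \<in> borel_measurable \<mu>" and qm[measurable]: "q \<in> borel_measurable \<mu>"
    and p0: "\<And>x. 0 \<le> p x" and q0: "\<And>x. 0 \<le> q x"
    and ip: "integrable \<mu> p" and iq: "integrable \<mu> q"
    and sp: "integral\<^sup>L \<mu> p = 1" and sq: "integral\<^sup>L \<mu> q = 1"
    and k: "1 \<le> k" and d0: "0 \<le> \<delta>" and d1: "\<delta> \<le> 1"
    and H1: "(\<integral>x. max 0 (p x - k * q x) \<partial>\<mu>) \<le> \<delta>"
    and H2: "(\<integral>x. max 0 (q x - k * p x) \<partial>\<mu>) \<le> (\<integral>x. max 0 (p x - k * q x) \<partial>\<mu>)"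
  shows "\<exists>u0 u3. u0 \<in> borel_measurable \<mu> \<and> u3 \<in> borel_measurable \<mu> \<and>
           integrable \<mu> u0 \<and> integrable \<mu> u3 \<and>
           (\<forall>x. 0 \<le> u0 x \<and> u0 x \<le> p x \<and> 0 \<le> u3 x \<and> u3 x \<le> q x \<and>
                p x - u0 x \<le> k * (q x - u3 x) \<and> q x - u3 x \<le> k * (p x - u0 x)) \<and>
           integral\<^sup>L \<mu> u0 = \<delta> \<and> integral\<^sup>L \<mu> u3 = \<delta>"
proof -
  interpret prob_space \<mu> by fact
  define a where "a = (\<integral>x. max 0 (p x - k * q x) \<partial>\<mu>)"
  define c where "c = (\<lambda>g. \<integral>x. max 0 (q x - g * p x) \<partial>\<mu>)"
  have kpos: "0 < k" using k by simp
  have imax: "integrable \<mu> (\<lambda>x. max 0 (f x - g * h x))"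
    if "integrable \<mu> f" "integrable \<mu> h" for f h :: "'a \<Rightarrow> real" and g
    using that by (intro integrable_max integrable_diff integrable_mult_right) auto
  have lip: "\<bar>c g - c h\<bar> \<le> \<bar>g - h\<bar>" for g h
  proof -
    have "\<bar>c g - c h\<bar> = \<bar>\<integral>x. max 0 (q x - g * p x) - max 0 (q x - h * p x) \<partial>\<mu>\<bar>"
      unfolding c_def using imax[OF iq ip] by (subst Bochner_Integration.integral_diff) auto
    also have "\<dots> \<le> (\<integral>x. \<bar>max 0 (q x - g * p x) - max 0 (q x - h * p x)\<bar> \<partial>\<mu>)"
      using integral_norm_bound[of \<mu> "\<lambda>x. max 0 (q x - g * p x) - max 0 (q x - h * p x)"] by simp
    also have "\<dots> \<le> (\<integral>x. \<bar>g - h\<bar> * p x \<partial>\<mu>)"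
    proof (rule integral_mono)
      show "integrable \<mu> (\<lambda>x. \<bar>max 0 (q x - g * p x) - max 0 (q x - h * p x)\<bar>)"
        using imax[OF iq ip] by auto
      show "integrable \<mu> (\<lambda>x. \<bar>g - h\<bar> * p x)" using ip by auto
      fix x
      have "\<bar>max 0 (q x - g * p x) - max 0 (q x - h * p x)\<bar> \<le> \<bar>(q x - g * p x) - (q x - h * p x)\<bar>"
        by (smt (verit))
      also have "\<dots> = \<bar>g - h\<bar> * p x" using p0[of x] by (simp add: abs_mult left_diff_distrib[symmetric] abs_minus_commute)
      finally show "\<bar>max 0 (q x - g * p x) - max 0 (q x - h * p x)\<bar> \<le> \<bar>g - h\<bar> * p x" .
    qed
    also have "\<dots> = \<bar>g - h\<bar>" using sp by simp
    finally show ?thesis .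
  qed
  have cont: "continuous_on {1/k..k} c"
    by (rule lipschitz_on_continuous_on[where L=1], rule lipschitz_onI) (use lip in \<open>auto simp: dist_real_def\<close>)
  have mineq1: "(\<integral>x. min (p x) (k * q x) \<partial>\<mu>) = 1 - a"
  proof -
    have "(\<integral>x. min (p x) (k * q x) \<partial>\<mu>) = (\<integral>x. p x - max 0 (p x - k * q x) \<partial>\<mu>)"
      by (intro Bochner_Integration.integral_cong) auto
    also have "\<dots> = 1 - a" unfolding a_def using ip imax[OF ip iq] sp by (subst Bochner_Integration.integral_diff) auto
    finally show ?thesis .
  qed
  have mineq2: "(\<integral>x. min (q x) (g * p x) \<partial>\<mu>) = 1 - c g" for g
  proof -
    have "(\<integral>x. min (q x) (g * p x) \<partial>\<mu>) = (\<integral>x. q x - max 0 (q x - g * p x) \<partial>\<mu>)"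
      by (intro Bochner_Integration.integral_cong) auto
    also have "\<dots> = 1 - c g" unfolding c_def using iq imax[OF iq ip] sq by (subst Bochner_Integration.integral_diff) auto
    finally show ?thesis .
  qed
  have ck: "k * c (1/k) = k - 1 + a"
  proof -
    have "k * c (1/k) = (\<integral>x. k * max 0 (q x - 1/k * p x) \<partial>\<mu>)"
      unfolding c_def by simp
    also have "\<dots> = (\<integral>x. (k * q x - p x) + max 0 (p x - k * q x) \<partial>\<mu>)"
    proof (intro Bochner_Integration.integral_cong refl)
      fix x
      have "k * max 0 (q x - 1/k * p x) = max 0 (k * q x - p x)"
      proof -
        have e: "k * (q x - 1/k * p x) = k * q x - p x" using kpos by (simp add: field_simps)
        show ?thesis unfolding max_mult_distrib_left e using kpos by simp
      qed
      then show "k * max 0 (q x - 1/k * p x) = (k * q x - p x) + max 0 (p x - k * q x)"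
        by (simp add: max_def)
    qed
    also have "\<dots> = k - 1 + a"
      unfolding a_def using ip iq imax[OF ip iq] sp sq by (subst Bochner_Integration.integral_add) auto
    finally show ?thesis .
  qed
  have a1: "a \<le> 1" using H1 d1 unfolding a_def by simp
  have "a \<le> c (1/k)"
  proof -
    have "0 \<le> (k - 1) * (1 - a)" using a1 k by simp
    moreover have "(k - 1) * (1 - a) = k * c (1/k) - k * a" using ck by (simp add: algebra_simps)
    ultimately have "k * a \<le> k * c (1/k)" by simp
    then show ?thesis using kpos by simp
  qed
  moreover have "c k \<le> a" using H2 unfolding a_def c_def .
  moreover have "1 \<le> k * k" using k mult_mono[of 1 k 1 k] by simp
  moreover have "1/k \<le> k" using k by (smt (verit) divide_le_eq_1)
  ultimately have "\<exists>x. 1/k \<le> x \<and> x \<le> k \<and> c x = a"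
    by (intro IVT2'[OF _ _ _ cont]) auto
  then obtain g where g: "1/k \<le> g" "g \<le> k" "c g = a" by blast
  define t where "t = (\<delta> - a) / (1 - a)"
  have aD: "a \<le> \<delta>" using H1 unfolding a_def .
  have t01: "0 \<le> t \<and> t \<le> 1 \<and> a + t * (1 - a) = \<delta>"
  proof (cases "a = 1")
    case True
    then show ?thesis using aD d1 by (simp add: t_def)
  next
    case False
    then have "0 < 1 - a" using a1 by simp
    then show ?thesis using aD d1 by (simp add: t_def divide_simps)
  qed
  then have t0: "0 \<le> t" and t1: "t \<le> 1" by auto
  define u0 where "u0 = (\<lambda>x. max 0 (p x - k * q x) + t * min (p x) (k * q x))"
  define u3 where "u3 = (\<lambda>x. max 0 (q x - g * p x) + t * min (q x) (g * p x))"
  have imin1: "integrable \<mu> (\<lambda>x. min (p x) (k * q x))" using ip iq by auto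
  have imin2: "integrable \<mu> (\<lambda>x. min (q x) (g * p x))" using ip iq by auto
  have iu0: "integrable \<mu> u0" unfolding u0_def using imin1 imax[OF ip iq] by auto
  have iu3: "integrable \<mu> u3" unfolding u3_def using imin2 imax[OF iq ip] by auto
  have "integral\<^sup>L \<mu> u0 = a + t * (1 - a)"
    unfolding u0_def a_def[symmetric]
    by (subst Bochner_Integration.integral_add[OF imax[OF ip iq]]) (use imin1 mineq1 in \<open>auto simp: a_def\<close>)
  then have I0: "integral\<^sup>L \<mu> u0 = \<delta>" using t01 by simp
  have "integral\<^sup>L \<mu> u3 = c g + t * (1 - c g)"
    unfolding u3_def
    by (subst Bochner_Integration.integral_add[OF imax[OF iq ip]]) (use imin2 mineq2[of g] in \<open>auto simp: c_def\<close>)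
  then have I3: "integral\<^sup>L \<mu> u3 = \<delta>" using t01 g by simp
  have pw: "0 \<le> u0 x \<and> u0 x \<le> p x \<and> 0 \<le> u3 x \<and> u3 x \<le> q x \<and>
                p x - u0 x \<le> k * (q x - u3 x) \<and> q x - u3 x \<le> k * (p x - u0 x)" for x
  proof -
    have s0: "max 0 (p x - k * q x) + min (p x) (k * q x) = p x" by (simp add: max_def min_def)
    have s3: "max 0 (q x - g * p x) + min (q x) (g * p x) = q x" by (simp add: max_def min_def)
    have e0: "p x - u0 x = (1 - t) * min (p x) (k * q x)" unfolding u0_def using s0 by (simp add: left_diff_distrib)
    have e3: "q x - u3 x = (1 - t) * min (q x) (g * p x)" unfolding u3_def using s3 by (simp add: left_diff_distrib)
    have gpos: "0 < g" using g kpos by (meson divide_pos_pos less_le_trans zero_less_one)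
    have kg: "1 \<le> k * g" using g kpos by (simp add: field_simps)
    have A: "min (p x) (k * q x) \<le> k * min (q x) (g * p x)"
    proof -
      have "1 * p x \<le> (k * g) * p x" by (rule mult_right_mono[OF kg p0])
      then have "p x \<le> k * (g * p x)" by (simp add: mult.assoc)
      then show ?thesis by (auto simp: min_def)
    qed
    have B: "min (q x) (g * p x) \<le> k * min (p x) (k * q x)"
    proof -
      have kk: "1 \<le> k * k" using k mult_mono[of 1 k 1 k] by simp
      have "1 * q x \<le> (k * k) * q x" by (rule mult_right_mono[OF kk q0])
      then have "q x \<le> k * (k * q x)" by (simp add: mult.assoc)
      moreover have "g * p x \<le> k * p x" using g p0[of x] by (simp add: mult_right_mono)
      ultimately show ?thesis by (auto simp: min_def)
    qed
    have m0: "0 \<le> min (p x) (k * q x)" "0 \<le> min (q x) (g * p x)"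
      using p0[of x] q0[of x] kpos gpos by auto
    show ?thesis
    proof (intro conjI)
      show "0 \<le> u0 x" unfolding u0_def using m0 t0 by auto
      show "0 \<le> u3 x" unfolding u3_def using m0 t0 by auto
      have "0 \<le> (1 - t) * min (p x) (k * q x)" using m0 t1 by simp
      then show "u0 x \<le> p x" using e0 by simp
      have "0 \<le> (1 - t) * min (q x) (g * p x)" using m0 t1 by simp
      then show "u3 x \<le> q x" using e3 by simp
      have "(1 - t) * min (p x) (k * q x) \<le> (1 - t) * (k * min (q x) (g * p x))"
        using A t1 by (intro mult_left_mono) auto
      then show "p x - u0 x \<le> k * (q x - u3 x)" unfolding e0 e3 by (simp add: mult_ac)
      have "(1 - t) * min (q x) (g * p x) \<le> (1 - t) * (k * min (p x) (k * q x))"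
        using B t1 by (intro mult_left_mono) auto
      then show "q x - u3 x \<le> k * (p x - u0 x)" unfolding e0 e3 by (simp add: mult_ac)
    qed
  qed
  have "u0 \<in> borel_measurable \<mu>" "u3 \<in> borel_measurable \<mu>"
    using iu0 iu3 by (auto intro: borel_measurable_integrable)
  then show ?thesis using iu0 iu3 I0 I3 pw by blast
qed

lemma decomp:
  fixes \<mu> :: "'a measure" and p q :: "'a \<Rightarrow> real" and k \<delta> :: real
  assumes \<mu>: "prob_space \<mu>"
    and pm: "p \<in> borel_measurable \<mu>" and qm: "q \<in> borel_measurable \<mu>"
    and p0: "\<And>x. 0 \<le> p x" and q0: "\<And>x. 0 \<le> q x"
    and ip: "integrable \<mu> p" and iq: "integrable \<mu> q"
    and sp: "integral\<^sup>L \<mu> p = 1" and sq: "integral\<^sup>L \<mu> q = 1"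
    and k: "1 \<le> k" and d0: "0 \<le> \<delta>" and d1: "\<delta> \<le> 1"
    and H1: "(\<integral>x. max 0 (p x - k * q x) \<partial>\<mu>) \<le> \<delta>"
    and H2: "(\<integral>x. max 0 (q x - k * p x) \<partial>\<mu>) \<le> \<delta>"
  shows "\<exists>u0 u3. u0 \<in> borel_measurable \<mu> \<and> u3 \<in> borel_measurable \<mu> \<and>
           integrable \<mu> u0 \<and> integrable \<mu> u3 \<and>
           (\<forall>x. 0 \<le> u0 x \<and> u0 x \<le> p x \<and> 0 \<le> u3 x \<and> u3 x \<le> q x \<and>
                p x - u0 x \<le> k * (q x - u3 x) \<and> q x - u3 x \<le> k * (p x - u0 x)) \<and>
           integral\<^sup>L \<mu> u0 = \<delta> \<and> integral\<^sup>L \<mu> u3 = \<delta>"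
proof (cases "(\<integral>x. max 0 (q x - k * p x) \<partial>\<mu>) \<le> (\<integral>x. max 0 (p x - k * q x) \<partial>\<mu>)")
  case True
  show ?thesis by (rule decomp_aux[OF assms(1-12) H1 True])
next
  case False
  then have F: "(\<integral>x. max 0 (p x - k * q x) \<partial>\<mu>) \<le> (\<integral>x. max 0 (q x - k * p x) \<partial>\<mu>)" by simp
  obtain u3 u0 where "u3 \<in> borel_measurable \<mu> \<and> u0 \<in> borel_measurable \<mu> \<and>
           integrable \<mu> u3 \<and> integrable \<mu> u0 \<and>
           (\<forall>x. 0 \<le> u3 x \<and> u3 x \<le> q x \<and> 0 \<le> u0 x \<and> u0 x \<le> p x \<and>
                q x - u3 x \<le> k * (p x - u0 x) \<and> p x - u0 x \<le> k * (q x - u3 x)) \<and>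
           integral\<^sup>L \<mu> u3 = \<delta> \<and> integral\<^sup>L \<mu> u0 = \<delta>"
    using decomp_aux[OF \<mu> qm pm q0 p0 iq ip sq sp k d0 d1 H2 F] by blast
  then show ?thesis by blast
qed

lemma dens_measure:
  fixes p :: "'a \<Rightarrow> real"
  assumes pm: "p \<in> borel_measurable \<mu>" and p0: "\<And>x. 0 \<le> p x" and ip: "integrable \<mu> p"
    and A: "A \<in> sets \<mu>"
  shows "measure (density \<mu> (\<lambda>x. ennreal (p x))) A = (\<integral>x. indicator A x * p x \<partial>\<mu>)"
proof -
  have i: "integrable \<mu> (\<lambda>x. indicator A x * p x)"
    using integrable_real_mult_indicator[OF A ip] by (simp add: mult_ac)
  have "emeasure (density \<mu> (\<lambda>x. ennreal (p x))) A = (\<integral>\<^sup>+x. ennreal (p x) * indicator A x \<partial>\<mu>)"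
    using pm A by (subst emeasure_density) auto
  also have "\<dots> = (\<integral>\<^sup>+x. ennreal (indicator A x * p x) \<partial>\<mu>)"
    by (intro nn_integral_cong) (auto simp: indicator_def)
  also have "\<dots> = ennreal (\<integral>x. indicator A x * p x \<partial>\<mu>)"
    using i p0 by (intro nn_integral_eq_integral) auto
  finally show ?thesis unfolding measure_def
    using p0 by (simp add: integral_nonneg)
qed

lemma dens_prob:
  fixes p :: "'a \<Rightarrow> real"
  assumes pm: "p \<in> borel_measurable \<mu>" and p0: "\<And>x. 0 \<le> p x"
    and P: "prob_space (density \<mu> (\<lambda>x. ennreal (p x)))"
  shows "integrable \<mu> p" "integral\<^sup>L \<mu> p = 1"
proof -
  have "emeasure (density \<mu> (\<lambda>x. ennreal (p x))) (space \<mu>) = 1"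
    using prob_space.emeasure_space_1[OF P] by simp
  moreover have "emeasure (density \<mu> (\<lambda>x. ennreal (p x))) (space \<mu>) = (\<integral>\<^sup>+x. ennreal (p x) \<partial>\<mu>)"
    using pm by (subst emeasure_density) (auto intro!: nn_integral_cong)
  ultimately have nn: "(\<integral>\<^sup>+x. ennreal (p x) \<partial>\<mu>) = ennreal 1" by simp
  show ip: "integrable \<mu> p" by (rule integrableI_nn_integral_finite[OF pm _ nn]) (simp add: p0)
  have "ennreal (integral\<^sup>L \<mu> p) = ennreal 1"
    using nn_integral_eq_integral[OF ip] p0 nn by simp
  then show "integral\<^sup>L \<mu> p = 1" using p0 by (simp add: integral_nonneg)
qed

lemma emeasure_density_add:
  fixes f g :: "'a \<Rightarrow> real"
  assumes [measurable]: "f \<in> borel_measurable \<mu>" "g \<in> borel_measurable \<mu>" and A[measurable]: "A \<in> sets \<mu>"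
    and f0: "\<And>x. 0 \<le> f x" and g0: "\<And>x. 0 \<le> g x"
  shows "emeasure (density \<mu> (\<lambda>x. ennreal (f x))) A + emeasure (density \<mu> (\<lambda>x. ennreal (g x))) A
       = emeasure (density \<mu> (\<lambda>x. ennreal (f x + g x))) A"
proof -
  have "emeasure (density \<mu> (\<lambda>x. ennreal (f x))) A + emeasure (density \<mu> (\<lambda>x. ennreal (g x))) A
     = (\<integral>\<^sup>+x. ennreal (f x) * indicator A x \<partial>\<mu>) + (\<integral>\<^sup>+x. ennreal (g x) * indicator A x \<partial>\<mu>)"
    by (simp add: emeasure_density)
  also have "\<dots> = (\<integral>\<^sup>+x. ennreal (f x) * indicator A x + ennreal (g x) * indicator A x \<partial>\<mu>)"
    by (rule nn_integral_add[symmetric]) auto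
  also have "\<dots> = (\<integral>\<^sup>+x. ennreal (f x + g x) * indicator A x \<partial>\<mu>)"
    using f0 g0 by (intro nn_integral_cong) (auto simp: indicator_def ennreal_plus)
  also have "\<dots> = emeasure (density \<mu> (\<lambda>x. ennreal (f x + g x))) A"
    by (simp add: emeasure_density)
  finally show ?thesis .
qed

lemma emeasure_density_cmult:
  fixes f :: "'a \<Rightarrow> real"
  assumes [measurable]: "f \<in> borel_measurable \<mu>" and A[measurable]: "A \<in> sets \<mu>"
    and f0: "\<And>x. 0 \<le> f x" and c: "0 \<le> c"
  shows "ennreal c * emeasure (density \<mu> (\<lambda>x. ennreal (f x))) A
       = emeasure (density \<mu> (\<lambda>x. ennreal (c * f x))) A"
proof -
  have "ennreal c * emeasure (density \<mu> (\<lambda>x. ennreal (f x))) A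
     = ennreal c * (\<integral>\<^sup>+x. ennreal (f x) * indicator A x \<partial>\<mu>)"
    by (simp add: emeasure_density)
  also have "\<dots> = (\<integral>\<^sup>+x. ennreal c * (ennreal (f x) * indicator A x) \<partial>\<mu>)"
    by (rule nn_integral_cmult[symmetric]) auto
  also have "\<dots> = (\<integral>\<^sup>+x. ennreal (c * f x) * indicator A x \<partial>\<mu>)"
    using f0 c by (intro nn_integral_cong) (auto simp: indicator_def ennreal_mult)
  also have "\<dots> = emeasure (density \<mu> (\<lambda>x. ennreal (c * f x))) A"
    by (simp add: emeasure_density)
  finally show ?thesis .
qed

definition mkW :: "'a measure \<Rightarrow> 'a measure \<Rightarrow> ('a \<Rightarrow> real) \<Rightarrow> real \<Rightarrow> 'a measure" where
  "mkW P \<mu> u m = (if m = 0 then P else density \<mu> (\<lambda>x. ennreal (u x / m)))"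

lemma mkW_props:
  fixes u :: "'a \<Rightarrow> real"
  assumes P: "prob_space P" "sets P = sets \<mu>"
    and um[measurable]: "u \<in> borel_measurable \<mu>" and u0: "\<And>x. 0 \<le> u x" and iu: "integrable \<mu> u"
    and m: "integral\<^sup>L \<mu> u = m"
  shows "prob_space (mkW P \<mu> u m)" "sets (mkW P \<mu> u m) = sets \<mu>"
    "\<And>A. A \<in> sets \<mu> \<Longrightarrow> ennreal m * emeasure (mkW P \<mu> u m) A = emeasure (density \<mu> (\<lambda>x. ennreal (u x))) A"
proof -
  have m0: "0 \<le> m" unfolding m[symmetric] by (rule Bochner_Integration.integral_nonneg) (simp add: u0)
  have tot: "emeasure (density \<mu> (\<lambda>x. ennreal (u x))) (space \<mu>) = ennreal m"
  proof -
    have "emeasure (density \<mu> (\<lambda>x. ennreal (u x))) (space \<mu>) = (\<integral>\<^sup>+x. ennreal (u x) \<partial>\<mu>)"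
      by (subst emeasure_density) (auto intro!: nn_integral_cong)
    also have "\<dots> = ennreal m" using nn_integral_eq_integral[OF iu] u0 m by simp
    finally show ?thesis .
  qed
  show "prob_space (mkW P \<mu> u m)"
  proof (cases "m = 0")
    case True then show ?thesis using P by (simp add: mkW_def)
  next
    case False
    then have mp: "0 < m" using m0 by simp
    show ?thesis unfolding mkW_def using False
    proof (simp, intro prob_spaceI)
      have "emeasure (density \<mu> (\<lambda>x. ennreal (u x / m))) (space \<mu>) = ennreal (1/m) * ennreal m"
        using emeasure_density_cmult[of u \<mu> "space \<mu>" "1/m"] tot u0 mp by (simp add: field_simps)
      also have "\<dots> = 1" using mp by (simp flip: ennreal_mult)
      finally show "emeasure (density \<mu> (\<lambda>x. ennreal (u x / m))) (space (density \<mu> (\<lambda>x. ennreal (u x / m)))) = 1"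
        by simp
    qed
  qed
  show "sets (mkW P \<mu> u m) = sets \<mu>" using P by (simp add: mkW_def)
  fix A assume A: "A \<in> sets \<mu>"
  show "ennreal m * emeasure (mkW P \<mu> u m) A = emeasure (density \<mu> (\<lambda>x. ennreal (u x))) A"
  proof (cases "m = 0")
    case True
    have "emeasure (density \<mu> (\<lambda>x. ennreal (u x))) A \<le> emeasure (density \<mu> (\<lambda>x. ennreal (u x))) (space \<mu>)"
      using A by (intro emeasure_mono) (auto dest: sets.sets_into_space)
    then show ?thesis using True tot by simp
  next
    case False
    then have mp: "0 < m" using m0 by simp
    have "ennreal m * emeasure (density \<mu> (\<lambda>x. ennreal (1/m * u x))) A
        = ennreal m * (ennreal (1/m) * emeasure (density \<mu> (\<lambda>x. ennreal (u x))) A)"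
      using emeasure_density_cmult[of u \<mu> A "1/m"] A u0 mp by simp
    also have "\<dots> = emeasure (density \<mu> (\<lambda>x. ennreal (u x))) A"
      using mp by (simp add: mult.assoc[symmetric] flip: ennreal_mult)
    finally show ?thesis using False by (simp add: mkW_def)
  qed
qed

lemma hockey:
  fixes p q :: "'a \<Rightarrow> real"
  assumes pm[measurable]: "p \<in> borel_measurable \<mu>" and qm[measurable]: "q \<in> borel_measurable \<mu>"
    and p0: "\<And>x. 0 \<le> p x" and q0: "\<And>x. 0 \<le> q x"
    and ip: "integrable \<mu> p" and iq: "integrable \<mu> q"
    and dp: "\<And>S. S \<in> sets \<mu> \<Longrightarrow> measure (density \<mu> (\<lambda>x. ennreal (p x))) S
                \<le> k * measure (density \<mu> (\<lambda>x. ennreal (q x))) S + \<delta>"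
  shows "(\<integral>x. max 0 (p x - k * q x) \<partial>\<mu>) \<le> \<delta>"
proof -
  define S where "S = {x \<in> space \<mu>. k * q x < p x}"
  have S[measurable]: "S \<in> sets \<mu>" unfolding S_def by measurable
  have i1: "integrable \<mu> (\<lambda>x. indicator S x * p x)"
    using integrable_real_mult_indicator[OF S ip] by (simp add: mult_ac)
  have i2: "integrable \<mu> (\<lambda>x. indicator S x * q x)"
    using integrable_real_mult_indicator[OF S iq] by (simp add: mult_ac)
  have "(\<integral>x. indicator S x * p x \<partial>\<mu>) \<le> k * (\<integral>x. indicator S x * q x \<partial>\<mu>) + \<delta>"
    using dp[OF S] dens_measure[OF pm p0 ip S] dens_measure[OF qm q0 iq S] by simp
  moreover have "(\<integral>x. max 0 (p x - k * q x) \<partial>\<mu>) = (\<integral>x. indicator S x * p x - k * (indicator S x * q x) \<partial>\<mu>)"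
    by (rule Bochner_Integration.integral_cong) (auto simp: S_def indicator_def)
  moreover have "\<dots> = (\<integral>x. indicator S x * p x \<partial>\<mu>) - k * (\<integral>x. indicator S x * q x \<partial>\<mu>)"
    using i1 i2 by (subst Bochner_Integration.integral_diff) auto
  ultimately show ?thesis by simp
qed

lemma split_mid:
  fixes k a b :: real
  assumes al1_def: "al1 = (if k = 1 then 1/2 else k / (k*k - 1))"
    and be1_def: "be1 = (if k = 1 then 0 else - 1 / (k*k - 1))"
    and al2_def: "al2 = (if k = 1 then 1/2 else - 1 / (k*k - 1))"
    and be2_def: "be2 = (if k = 1 then 0 else k / (k*k - 1))"
  assumes k: "1 \<le> k" and a0: "0 \<le> a" and b0: "0 \<le> b" and ab: "a \<le> k * b" and ba: "b \<le> k * a"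
  shows "0 \<le> al1 * a + be1 * b" "0 \<le> al2 * a + be2 * b"
    "k * (al1 * a + be1 * b) + (al2 * a + be2 * b) = a"
    "(al1 * a + be1 * b) + k * (al2 * a + be2 * b) = b"
    "al1 + be1 = 1 / (1 + k)" "al2 + be2 = 1 / (1 + k)"
proof -
  let ?G = "0 \<le> al1 * a + be1 * b \<and> 0 \<le> al2 * a + be2 * b \<and>
    k * (al1 * a + be1 * b) + (al2 * a + be2 * b) = a \<and>
    (al1 * a + be1 * b) + k * (al2 * a + be2 * b) = b \<and>
    al1 + be1 = 1 / (1 + k) \<and> al2 + be2 = 1 / (1 + k)"
  have ?G
  proof (cases "k = 1")
    case True
    then have "a = b" using ab ba by simp
    then show ?thesis using True a0 by (simp add: al1_def be1_def al2_def be2_def)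
  next
    case False
    then have k1: "1 < k" using k by simp
    have kk: "0 < k * k - 1" using k1 mult_strict_mono[of 1 k 1 k] by simp
    define D where "D = k * k - 1"
    have Dp: "0 < D" using kk by (simp add: D_def)
    have d: "al1 = k / D" "be1 = - 1 / D" "al2 = - 1 / D" "be2 = k / D"
      using False by (simp_all add: al1_def be1_def al2_def be2_def D_def)
    have e1: "al1 * a + be1 * b = (k * a - b) / D"
      unfolding d by (simp add: diff_divide_distrib)
    have e2: "al2 * a + be2 * b = (k * b - a) / D"
      unfolding d by (simp add: diff_divide_distrib)
    have g1: "0 \<le> al1 * a + be1 * b" unfolding e1 using Dp ba by simp
    have g2: "0 \<le> al2 * a + be2 * b" unfolding e2 using Dp ab by simp
    have n3: "k * (k * a - b) + (k * b - a) = D * a" unfolding D_def by (simp add: algebra_simps)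
    have n4: "(k * a - b) + k * (k * b - a) = D * b" unfolding D_def by (simp add: algebra_simps)
    have g3: "k * (al1 * a + be1 * b) + (al2 * a + be2 * b) = a"
    proof -
      have "k * (al1 * a + be1 * b) + (al2 * a + be2 * b) = (k * (k * a - b) + (k * b - a)) / D"
        unfolding e1 e2 by (simp add: add_divide_distrib)
      then show ?thesis unfolding n3 using Dp by simp
    qed
    have g4: "(al1 * a + be1 * b) + k * (al2 * a + be2 * b) = b"
    proof -
      have "(al1 * a + be1 * b) + k * (al2 * a + be2 * b) = ((k * a - b) + k * (k * b - a)) / D"
        unfolding e1 e2 by (simp add: add_divide_distrib)
      then show ?thesis unfolding n4 using Dp by simp
    qed
    have km: "k - 1 \<noteq> 0" "1 + k \<noteq> 0" using k1 by auto
    have Dk: "D = (k - 1) * (1 + k)" unfolding D_def by (simp add: algebra_simps)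
    have q: "(k - 1) / D = 1 / (1 + k)" unfolding Dk using km by simp
    have g5: "al1 + be1 = 1 / (1 + k)" unfolding d q[symmetric] by (simp add: diff_divide_distrib)
    have g6: "al2 + be2 = 1 / (1 + k)" unfolding d q[symmetric] by (simp add: diff_divide_distrib)
    show ?thesis using g1 g2 g3 g4 g5 g6 by blast
  qed
  then show "0 \<le> al1 * a + be1 * b" "0 \<le> al2 * a + be2 * b"
    "k * (al1 * a + be1 * b) + (al2 * a + be2 * b) = a"
    "(al1 * a + be1 * b) + k * (al2 * a + be2 * b) = b"
    "al1 + be1 = 1 / (1 + k)" "al2 + be2 = 1 / (1 + k)" by blast+
qed

lemma dp_refines:
  fixes M :: "'b channel" and \<epsilon> \<delta> :: real
  assumes ch: "is_channel M" and dp: "DP \<epsilon> \<delta> M" and e: "0 \<le> \<epsilon>" and d0: "0 \<le> \<delta>" and d1: "\<delta> \<le> 1"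
  shows "C_eps_delta \<epsilon> \<delta> \<sqsubseteq>\<^sub>c M"
proof -
  obtain \<mu> p q where mu: "prob_space \<mu>" and sets: "sets \<mu> = sets (fst M)"
    and pm[measurable]: "p \<in> borel_measurable \<mu>" and qm[measurable]: "q \<in> borel_measurable \<mu>"
    and p0: "\<And>x. 0 \<le> p x" and q0: "\<And>x. 0 \<le> q x"
    and P: "fst M = density \<mu> (\<lambda>x. ennreal (p x))" and Q: "snd M = density \<mu> (\<lambda>x. ennreal (q x))"
    using channel_densities[OF ch] by metis
  have PP: "prob_space (fst M)" and QQ: "prob_space (snd M)" and PQ: "sets (snd M) = sets (fst M)"
    using ch by (auto simp: is_channel_def)
  have ip: "integrable \<mu> p" and sp: "integral\<^sup>L \<mu> p = 1" using dens_prob[OF pm p0] PP P by auto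
  have iq: "integrable \<mu> q" and sq: "integral\<^sup>L \<mu> q = 1" using dens_prob[OF qm q0] QQ Q by auto
  define k where "k = exp \<epsilon>"
  have k1: "1 \<le> k" unfolding k_def using e by simp
  have kpos: "0 < k" using k1 by simp
  have H1: "(\<integral>x. max 0 (p x - k * q x) \<partial>\<mu>) \<le> \<delta>"
  proof (rule hockey[OF pm qm p0 q0 ip iq])
    fix S assume "S \<in> sets \<mu>"
    then show "measure (density \<mu> (\<lambda>x. ennreal (p x))) S \<le> k * measure (density \<mu> (\<lambda>x. ennreal (q x))) S + \<delta>"
      using dp sets unfolding DP_def P[symmetric] Q[symmetric] k_def by auto
  qed
  have H2: "(\<integral>x. max 0 (q x - k * p x) \<partial>\<mu>) \<le> \<delta>"
  proof (rule hockey[OF qm pm q0 p0 iq ip])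
    fix S assume "S \<in> sets \<mu>"
    then show "measure (density \<mu> (\<lambda>x. ennreal (q x))) S \<le> k * measure (density \<mu> (\<lambda>x. ennreal (p x))) S + \<delta>"
      using dp sets unfolding DP_def P[symmetric] Q[symmetric] k_def by auto
  qed
  obtain u0 u3 where U: "u0 \<in> borel_measurable \<mu> \<and> u3 \<in> borel_measurable \<mu> \<and>
           integrable \<mu> u0 \<and> integrable \<mu> u3 \<and>
           (\<forall>x. 0 \<le> u0 x \<and> u0 x \<le> p x \<and> 0 \<le> u3 x \<and> u3 x \<le> q x \<and>
                p x - u0 x \<le> k * (q x - u3 x) \<and> q x - u3 x \<le> k * (p x - u0 x)) \<and>
           integral\<^sup>L \<mu> u0 = \<delta> \<and> integral\<^sup>L \<mu> u3 = \<delta>"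
    using decomp[OF mu pm qm p0 q0 ip iq sp sq k1 d0 d1 H1 H2] by blast
  have u0m[measurable]: "u0 \<in> borel_measurable \<mu>" and u3m[measurable]: "u3 \<in> borel_measurable \<mu>"
    and iu0: "integrable \<mu> u0" and iu3: "integrable \<mu> u3"
    and I0: "integral\<^sup>L \<mu> u0 = \<delta>" and I3: "integral\<^sup>L \<mu> u3 = \<delta>" using U by auto
  have pw: "\<And>x. 0 \<le> u0 x \<and> u0 x \<le> p x \<and> 0 \<le> u3 x \<and> u3 x \<le> q x \<and>
                p x - u0 x \<le> k * (q x - u3 x) \<and> q x - u3 x \<le> k * (p x - u0 x)" using U by blast
  define al1 where "al1 = (if k = 1 then 1/2 else k / (k*k - 1))"
  define be1 where "be1 = (if k = 1 then 0 else - 1 / (k*k - 1))"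
  define al2 where "al2 = (if k = 1 then 1/2 else - 1 / (k*k - 1))"
  define be2 where "be2 = (if k = 1 then 0 else k / (k*k - 1))"
  define u1 where "u1 = (\<lambda>x. al1 * (p x - u0 x) + be1 * (q x - u3 x))"
  define u2 where "u2 = (\<lambda>x. al2 * (p x - u0 x) + be2 * (q x - u3 x))"
  have u1m[measurable]: "u1 \<in> borel_measurable \<mu>" and u2m[measurable]: "u2 \<in> borel_measurable \<mu>"
    unfolding u1_def u2_def by measurable
  have sm: "0 \<le> u1 x \<and> 0 \<le> u2 x \<and> k * u1 x + u2 x = p x - u0 x \<and> u1 x + k * u2 x = q x - u3 x" for x
  proof -
    have a0: "0 \<le> p x - u0 x" and b0: "0 \<le> q x - u3 x" using pw[of x] by auto
    note S = split_mid[OF al1_def be1_def al2_def be2_def k1 a0 b0, of ] 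
    show ?thesis using S pw[of x] unfolding u1_def u2_def by auto
  qed
  have ss: "al1 + be1 = 1 / (1 + k)" "al2 + be2 = 1 / (1 + k)"
    using split_mid[OF al1_def be1_def al2_def be2_def k1, of 0 0] by auto
  define b where "b = (1 - \<delta>) / (1 + k)"
  have b0: "0 \<le> b" unfolding b_def using d1 kpos by simp
  have ipu0: "integrable \<mu> (\<lambda>x. p x - u0 x)" and iqu3: "integrable \<mu> (\<lambda>x. q x - u3 x)"
    using ip iq iu0 iu3 by auto
  have Ipu0: "(\<integral>x. p x - u0 x \<partial>\<mu>) = 1 - \<delta>" using ip iu0 sp I0 by simp
  have Iqu3: "(\<integral>x. q x - u3 x \<partial>\<mu>) = 1 - \<delta>" using iq iu3 sq I3 by simp
  have iu1: "integrable \<mu> u1" and iu2: "integrable \<mu> u2"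
    unfolding u1_def u2_def using ipu0 iqu3 by auto
  have I1: "integral\<^sup>L \<mu> u1 = b"
  proof -
    have "integral\<^sup>L \<mu> u1 = al1 * (1 - \<delta>) + be1 * (1 - \<delta>)"
      unfolding u1_def using ipu0 iqu3 Ipu0 Iqu3 by simp
    also have "\<dots> = (al1 + be1) * (1 - \<delta>)" by (simp add: algebra_simps)
    also have "\<dots> = b" unfolding b_def ss by simp
    finally show ?thesis .
  qed
  have I2: "integral\<^sup>L \<mu> u2 = b"
  proof -
    have "integral\<^sup>L \<mu> u2 = al2 * (1 - \<delta>) + be2 * (1 - \<delta>)"
      unfolding u2_def using ipu0 iqu3 Ipu0 Iqu3 by simp
    also have "\<dots> = (al2 + be2) * (1 - \<delta>)" by (simp add: algebra_simps)
    also have "\<dots> = b" unfolding b_def ss by simp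
    finally show ?thesis .
  qed
  have PM: "prob_space (fst M)" "sets (fst M) = sets \<mu>" using PP sets by auto
  define K where "K = (\<lambda>i::nat. if i = 0 then mkW (fst M) \<mu> u0 \<delta> else if i = 1 then mkW (fst M) \<mu> u1 b
      else if i = 2 then mkW (fst M) \<mu> u2 b else mkW (fst M) \<mu> u3 \<delta>)"
  have u00: "\<And>x. 0 \<le> u0 x" and u30: "\<And>x. 0 \<le> u3 x" and u10: "\<And>x. 0 \<le> u1 x" and u20: "\<And>x. 0 \<le> u2 x"
    using pw sm by auto
  note W0 = mkW_props[OF PM u0m u00 iu0 I0]
  note W1 = mkW_props[OF PM u1m u10 iu1 I1]
  note W2 = mkW_props[OF PM u2m u20 iu2 I2]
  note W3 = mkW_props[OF PM u3m u30 iu3 I3]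
  have Kp: "prob_space (K i)" "sets (K i) = sets (fst M)" for i
    unfolding K_def using W0 W1 W2 W3 sets by auto
  let ?D = "\<lambda>f A. emeasure (density \<mu> (\<lambda>x. ennreal (f x))) A"
  have kb: "(1 - \<delta>) * exp \<epsilon> / (1 + exp \<epsilon>) = k * b" "(1 - \<delta>) / (1 + exp \<epsilon>) = b"
    unfolding b_def k_def by simp_all
  have eK: "ennreal (k * b) * emeasure (K j) A = ?D (\<lambda>x. k * f x) A"
    if "A \<in> sets \<mu>" "ennreal b * emeasure (K j) A = ?D f A" "f \<in> borel_measurable \<mu>" "\<And>x. 0 \<le> f x" for j A f
  proof -
    have "ennreal (k * b) * emeasure (K j) A = ennreal k * (ennreal b * emeasure (K j) A)"
      using kpos b0 by (simp add: ennreal_mult mult.assoc)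
    also have "\<dots> = ennreal k * ?D f A" using that by simp
    also have "\<dots> = ?D (\<lambda>x. k * f x) A" using emeasure_density_cmult[of f \<mu> A k] that kpos by simp
    finally show ?thesis .
  qed
  show ?thesis
    unfolding refines_def C_eps_delta_def mat_channel_def fst_conv snd_conv kb
  proof (intro exI conjI)
    show "K \<in> fin_row [\<delta>, k * b, b, 0] \<rightarrow>\<^sub>M prob_algebra (fst M)"
      by (rule kernel_from_fin_row[OF Kp])
    show "fin_row [\<delta>, k * b, b, 0] \<bind> K = fst M"
    proof (rule measure_eqI)
      show "sets (fin_row [\<delta>, k * b, b, 0] \<bind> K) = sets (fst M)" by (rule sets_bind_fin_row[OF Kp])
    next
      fix A assume "A \<in> sets (fin_row [\<delta>, k * b, b, 0] \<bind> K)"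
      then have A: "A \<in> sets (fst M)" "A \<in> sets \<mu>" using sets_bind_fin_row[OF Kp] sets by auto
      have "emeasure (fin_row [\<delta>, k * b, b, 0] \<bind> K) A
         = ennreal \<delta> * emeasure (K 0) A + ennreal (k * b) * emeasure (K 1) A + ennreal b * emeasure (K 2) A"
        by (subst emeasure_bind_fin_row[OF Kp A(1)]) (simp add: numeral_eq_Suc)
      also have "\<dots> = ?D u0 A + ?D (\<lambda>x. k * u1 x) A + ?D u2 A"
        using W0(3)[OF A(2)] W2(3)[OF A(2)] eK[OF A(2) _ u1m u10, of 1] W1(3)[OF A(2)]
        by (simp add: K_def)
      also have "\<dots> = ?D (\<lambda>x. u0 x + k * u1 x + u2 x) A"
      proof -
        have e1: "?D u0 A + ?D (\<lambda>x. k * u1 x) A = ?D (\<lambda>x. u0 x + k * u1 x) A"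
          by (rule emeasure_density_add) (use u00 u10 kpos A(2) in auto)
        have e2: "?D (\<lambda>x. u0 x + k * u1 x) A + ?D u2 A = ?D (\<lambda>x. u0 x + k * u1 x + u2 x) A"
          by (rule emeasure_density_add) (use u00 u10 u20 kpos A(2) in auto)
        show ?thesis using e1 e2 by metis
      qed
      also have "\<dots> = ?D p A"
        using sm by (intro arg_cong2[where f=emeasure] arg_cong2[where f=density] refl ext) (smt (verit))
      finally show "emeasure (fin_row [\<delta>, k * b, b, 0] \<bind> K) A = emeasure (fst M) A" using P by simp
    qed
    show "fin_row [0, b, k * b, \<delta>] \<bind> K = snd M"
    proof (rule measure_eqI)
      show "sets (fin_row [0, b, k * b, \<delta>] \<bind> K) = sets (snd M)" using sets_bind_fin_row[OF Kp] PQ by simp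
    next
      fix A assume "A \<in> sets (fin_row [0, b, k * b, \<delta>] \<bind> K)"
      then have A: "A \<in> sets (fst M)" "A \<in> sets \<mu>" using sets_bind_fin_row[OF Kp] sets by auto
      have "emeasure (fin_row [0, b, k * b, \<delta>] \<bind> K) A
         = ennreal b * emeasure (K 1) A + ennreal (k * b) * emeasure (K 2) A + ennreal \<delta> * emeasure (K 3) A"
        by (subst emeasure_bind_fin_row[OF Kp A(1)]) (simp add: numeral_eq_Suc)
      also have "\<dots> = ?D u1 A + ?D (\<lambda>x. k * u2 x) A + ?D u3 A"
        using W1(3)[OF A(2)] W3(3)[OF A(2)] eK[OF A(2) _ u2m u20, of 2] W2(3)[OF A(2)]
        by (simp add: K_def)
      also have "\<dots> = ?D (\<lambda>x. u1 x + k * u2 x + u3 x) A"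
      proof -
        have e1: "?D u1 A + ?D (\<lambda>x. k * u2 x) A = ?D (\<lambda>x. u1 x + k * u2 x) A"
          by (rule emeasure_density_add) (use u20 u10 kpos A(2) in auto)
        have e2: "?D (\<lambda>x. u1 x + k * u2 x) A + ?D u3 A = ?D (\<lambda>x. u1 x + k * u2 x + u3 x) A"
          by (rule emeasure_density_add) (use u30 u10 u20 kpos A(2) in auto)
        show ?thesis using e1 e2 by metis
      qed
      also have "\<dots> = ?D q A"
        using sm by (intro arg_cong2[where f=emeasure] arg_cong2[where f=density] refl ext) (smt (verit))
      finally show "emeasure (fin_row [0, b, k * b, \<delta>] \<bind> K) A = emeasure (snd M) A" using Q by simp
    qed
  qed
qed

lemma measure_bind_fin_row:
  assumes K: "\<And>i. prob_space (K i)" "\<And>i. sets (K i) = sets N" and A: "A \<in> sets N"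
    and nn: "\<And>i. i < length xs \<Longrightarrow> 0 \<le> xs!i"
  shows "measure (bind (fin_row xs) K) A = (\<Sum>i<length xs. xs!i * measure (K i) A)"
proof -
  have "emeasure (bind (fin_row xs) K) A = (\<Sum>i<length xs. ennreal (xs!i) * emeasure (K i) A)"
    by (rule emeasure_bind_fin_row[OF K A])
  also have "\<dots> = (\<Sum>i<length xs. ennreal (xs!i * measure (K i) A))"
    using nn by (intro sum.cong refl) (simp add: finite_measure.emeasure_eq_measure[OF prob_space.finite_measure[OF K(1)]] ennreal_mult)
  also have "\<dots> = ennreal (\<Sum>i<length xs. xs!i * measure (K i) A)"
    using nn by (subst sum_ennreal) auto
  finally have "emeasure (bind (fin_row xs) K) A = ennreal (\<Sum>i<length xs. xs!i * measure (K i) A)" .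
  moreover have "0 \<le> (\<Sum>i<length xs. xs!i * measure (K i) A)"
    using nn by (intro sum_nonneg) auto
  ultimately show ?thesis unfolding measure_def by (metis enn2real_ennreal)
qed

lemma refines_dp:
  fixes M :: "'b channel" and \<epsilon> \<delta> :: real
  assumes ch: "is_channel M" and r: "C_eps_delta \<epsilon> \<delta> \<sqsubseteq>\<^sub>c M"
    and e: "0 \<le> \<epsilon>" and d0: "0 \<le> \<delta>" and d1: "\<delta> \<le> 1"
  shows "DP \<epsilon> \<delta> M"
proof -
  define k where "k = exp \<epsilon>"
  have k1: "1 \<le> k" unfolding k_def using e by simp
  define b where "b = (1 - \<delta>) / (1 + k)"
  have b0: "0 \<le> b" unfolding b_def using d1 k1 by simp
  have kb: "(1 - \<delta>) * exp \<epsilon> / (1 + exp \<epsilon>) = k * b" "(1 - \<delta>) / (1 + exp \<epsilon>) = b"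
    unfolding b_def k_def by simp_all
  obtain W where Wm: "W \<in> fin_row [\<delta>, k * b, b, 0] \<rightarrow>\<^sub>M prob_algebra (fst M)"
    and B0: "fin_row [\<delta>, k * b, b, 0] \<bind> W = fst M" and B1: "fin_row [0, b, k * b, \<delta>] \<bind> W = snd M"
    using r unfolding refines_def C_eps_delta_def mat_channel_def fst_conv snd_conv kb by blast
  have Wp: "prob_space (W i)" "sets (W i) = sets (fst M)" for i
    using measurable_space[OF Wm, of i] by (auto simp: space_prob_algebra)
  have kb0: "0 \<le> k * b" using k1 b0 by simp
  show ?thesis unfolding DP_def
  proof
    fix S assume S: "S \<in> sets (fst M)"
    define c where "c = (\<lambda>i. measure (W i) S)"
    have c01: "0 \<le> c i" "c i \<le> 1" for i unfolding c_def using prob_space.prob_le_1[OF Wp(1)] by auto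
    have m0: "measure (fst M) S = \<delta> * c 0 + k * b * c 1 + b * c 2"
      unfolding B0[symmetric] using d0 kb0 b0
      by (subst measure_bind_fin_row[OF Wp S]) (auto simp: c_def numeral_eq_Suc less_Suc_eq)
    have m1: "measure (snd M) S = b * c 1 + k * b * c 2 + \<delta> * c 3"
      unfolding B1[symmetric] using d0 kb0 b0
      by (subst measure_bind_fin_row[OF Wp S]) (auto simp: c_def numeral_eq_Suc less_Suc_eq)
    have a1: "\<delta> * c 0 \<le> \<delta>" "\<delta> * c 3 \<le> \<delta>" using c01 d0 by (auto simp: mult_left_le)
    have a2: "b * c 2 \<le> k * (k * b * c 2)" "b * c 1 \<le> k * (k * b * c 1)"
    proof -
      have kk: "1 \<le> k * k" using k1 mult_mono[of 1 k 1 k] by simp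
      have "1 * (b * c 2) \<le> (k * k) * (b * c 2)" using c01 b0 kk by (intro mult_right_mono) auto
      then show "b * c 2 \<le> k * (k * b * c 2)" by (simp add: mult_ac)
      have "1 * (b * c 1) \<le> (k * k) * (b * c 1)" using c01 b0 kk by (intro mult_right_mono) auto
      then show "b * c 1 \<le> k * (k * b * c 1)" by (simp add: mult_ac)
    qed
    have a3: "0 \<le> \<delta> * c 0" "0 \<le> \<delta> * c 3" using c01 d0 by auto
    have a4: "0 \<le> k * b * c 1" "0 \<le> k * b * c 2" using c01 kb0 by auto
    have e1: "k * (b * c 1 + k * b * c 2 + \<delta> * c 3) = k * b * c 1 + k * (k * b * c 2) + k * (\<delta> * c 3)"
      by (simp add: algebra_simps)
    have e2: "k * (\<delta> * c 0 + k * b * c 1 + b * c 2) = k * (\<delta> * c 0) + k * (k * b * c 1) + k * b * c 2"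
      by (simp add: algebra_simps)
    have a5: "0 \<le> k * (\<delta> * c 3)" "0 \<le> k * (\<delta> * c 0)" using a3 k1 by auto
    show "measure (fst M) S \<le> exp \<epsilon> * measure (snd M) S + \<delta> \<and>
          measure (snd M) S \<le> exp \<epsilon> * measure (fst M) S + \<delta>"
      unfolding m0 m1 k_def[symmetric] using a1 a2 a4 a5 e1 e2 by linarith
  qed
qed

lemma test_from_refines:
  fixes D :: "'d channel"
  assumes ch: "is_channel D" and r: "D \<sqsubseteq>\<^sub>c mat_channel [x0, x1] [y0, y1]"
    and x0: "0 \<le> x0" and y0: "0 \<le> y0"
  obtains \<phi> where "\<phi> \<in> borel_measurable (fst D)" "\<phi> \<in> borel_measurable (snd D)"
    "\<And>y. 0 \<le> \<phi> y" "\<And>y. \<phi> y \<le> 1"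
    "integral\<^sup>L (fst D) \<phi> = x0" "integral\<^sup>L (snd D) \<phi> = y0"
proof -
  have P: "prob_space (fst D)" and Q: "prob_space (snd D)" and PQ: "sets (snd D) = sets (fst D)"
    using ch by (auto simp: is_channel_def)
  obtain W where Wm: "W \<in> fst D \<rightarrow>\<^sub>M prob_algebra (fin_row [x0, x1])"
    and B0: "fst D \<bind> W = fin_row [x0, x1]" and B1: "snd D \<bind> W = fin_row [y0, y1]"
    using r unfolding refines_def mat_channel_def fst_conv snd_conv by blast
  have Wm2: "W \<in> snd D \<rightarrow>\<^sub>M prob_algebra (fin_row [x0, x1])"
    using Wm unfolding measurable_cong_sets[OF PQ refl] .
  define \<phi> where "\<phi> = (\<lambda>y. min 1 (measure (W y) {0}))"
  have m1: "(\<lambda>y. measure (W y) {0}) \<in> borel_measurable (fst D)"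
    by (rule measurable_compose[OF Wm measurable_measure_prob_algebra]) simp
  have pm: "\<phi> \<in> borel_measurable (fst D)" unfolding \<phi>_def using m1 by measurable
  have qm: "\<phi> \<in> borel_measurable (snd D)" using pm unfolding measurable_cong_sets[OF PQ refl] .
  have Wy: "prob_space (W y)" "sets (W y) = UNIV" if "y \<in> space (fst D)" for y
    using measurable_space[OF Wm that] by (auto simp: space_prob_algebra)
  have ph: "0 \<le> \<phi> y" "\<phi> y \<le> 1" for y unfolding \<phi>_def by auto
  have ee: "emeasure (W y) {0} = ennreal (\<phi> y)" if "y \<in> space (fst D)" for y
    unfolding \<phi>_def using Wy[OF that] prob_space.prob_le_1[OF Wy(1)[OF that], of "{0}"]
    by (simp add: finite_measure.emeasure_eq_measure prob_space.finite_measure)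
  have int: "integral\<^sup>L N \<phi> = z" if N: "prob_space N" "sets N = sets (fst D)" and
    B: "N \<bind> W = fin_row [z, zz]" and z: "0 \<le> z" for N z zz
  proof -
    interpret N: prob_space N by fact
    have WN: "W \<in> N \<rightarrow>\<^sub>M prob_algebra (fin_row [x0, x1])"
      using Wm unfolding measurable_cong_sets[OF N(2) refl] .
    have sp: "space N = space (fst D)" using N(2) by (rule sets_eq_imp_space_eq)
    have "emeasure (N \<bind> W) {0} = (\<integral>\<^sup>+y. emeasure (W y) {0} \<partial>N)"
      by (rule emeasure_bind[where N="fin_row [x0, x1]"]) (auto intro: measurable_prob_algebraD WN simp: N.not_empty)
    also have "\<dots> = (\<integral>\<^sup>+y. ennreal (\<phi> y) \<partial>N)"
      using ee sp by (intro nn_integral_cong) auto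
    also have "\<dots> = ennreal (integral\<^sup>L N \<phi>)"
    proof -
      have pmN: "\<phi> \<in> borel_measurable N" using pm unfolding measurable_cong_sets[OF N(2) refl] .
      show ?thesis by (intro nn_integral_eq_integral N.integrable_const_bound[where B=1]) (use pmN ph in auto)
    qed
    finally have "ennreal (integral\<^sup>L N \<phi>) = ennreal z"
      using B by (simp add: emeasure_fin_row)
    then show ?thesis using z ph by (simp add: Bochner_Integration.integral_nonneg)
  qed
  show ?thesis
  proof (rule that[OF pm qm ph])
    show "integral\<^sup>L (fst D) \<phi> = x0" by (rule int[OF P refl B0 x0])
    show "integral\<^sup>L (snd D) \<phi> = y0" by (rule int[OF Q PQ B1 y0])
  qed
qed

lemma st_exists:
  fixes k b x y :: real
  assumes k: "1 \<le> k" and b0: "0 \<le> b" and x: "k * b \<le> x" and y0: "0 \<le> y" and y: "y \<le> b"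
  shows "\<exists>s t. 0 \<le> s \<and> s \<le> 1 \<and> 0 \<le> t \<and> t \<le> 1 \<and>
           s * x + t * ((1 + k) * b - x) = k * b \<and> s * y + t * ((1 + k) * b - y) = b"
proof (cases "b = 0 \<or> x = y")
  case True
  show ?thesis
  proof (cases "b = 0")
    case True
    then show ?thesis by (intro exI[of _ 0]) simp
  next
    case False
    then have xy: "x = y" using True by simp
    have "b \<le> k * b" using k b0 mult_right_mono[of 1 k b] by simp
    then have "x = b" "k * b = b" using x y xy by linarith+
    then show ?thesis by (intro exI[of _ 1] exI[of _ 0]) (simp add: xy)
  qed
next
  case False
  then have bp: "0 < b" and xy: "x \<noteq> y" using b0 by auto
  have kb: "b \<le> k * b" using k b0 mult_right_mono[of 1 k b] by simp
  have xgy: "y < x" using kb x y xy by linarith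
  define D where "D = (1 + k) * b"
  have Dp: "0 < D" unfolding D_def using bp k by simp
  define den where "den = D * (x - y)"
  have denp: "0 < den" unfolding den_def using Dp xgy by simp
  define s where "s = b * ((k - 1) * D - k * y + x) / den"
  define t where "t = b * (x - k * y) / den"
  have ky: "k * y \<le> k * b" using y k by (intro mult_left_mono) auto
  have x0: "0 \<le> x" using x kb b0 by linarith
  have kx: "x \<le> k * x" using k x0 mult_right_mono[of 1 k x] by simp
  have kkb: "k * (k * b) \<le> k * x" using x k by (intro mult_left_mono) auto
  have t0: "0 \<le> t" unfolding t_def using bp denp ky x by simp
  have t1: "t \<le> 1"
  proof -
    have "0 \<le> b * (k * x - y)" using bp kx y kb x by (intro mult_nonneg_nonneg) linarith+
    moreover have "den - b * (x - k * y) = b * (k * x - y)" unfolding den_def D_def by (simp add: algebra_simps)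
    ultimately have "b * (x - k * y) \<le> den" by linarith
    then show ?thesis unfolding t_def using denp by simp
  qed
  have s0: "0 \<le> s"
  proof -
    have "0 \<le> (k - 1) * D" using k Dp by simp
    then show ?thesis unfolding s_def using bp denp ky x by simp
  qed
  have s1: "s \<le> 1"
  proof -
    have "0 \<le> b * (k * x - (k * k - 1) * b - y)"
    proof (intro mult_nonneg_nonneg)
      have "(k * k - 1) * b + y \<le> k * (k * b) - b + b" using y by (simp add: algebra_simps)
      then show "0 \<le> k * x - (k * k - 1) * b - y" using kkb by linarith
    qed (use bp in simp)
    moreover have "den - b * ((k - 1) * D - k * y + x) = b * (k * x - (k * k - 1) * b - y)"
      unfolding den_def D_def by (simp add: algebra_simps)
    ultimately have "b * ((k - 1) * D - k * y + x) \<le> den" by linarith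
    then show ?thesis unfolding s_def using denp by simp
  qed
  have eq1: "s * x + t * (D - x) = k * b"
  proof -
    have "s * x + t * (D - x) = (b * ((k - 1) * D - k * y + x) * x + b * (x - k * y) * (D - x)) / den"
      unfolding s_def t_def by (simp add: add_divide_distrib)
    also have "b * ((k - 1) * D - k * y + x) * x + b * (x - k * y) * (D - x) = k * b * den"
      unfolding den_def by (simp add: algebra_simps)
    finally show ?thesis using denp by simp
  qed
  have eq2: "s * y + t * (D - y) = b"
  proof -
    have "s * y + t * (D - y) = (b * ((k - 1) * D - k * y + x) * y + b * (x - k * y) * (D - y)) / den"
      unfolding s_def t_def by (simp add: add_divide_distrib)
    also have "b * ((k - 1) * D - k * y + x) * y + b * (x - k * y) * (D - y) = b * den"
      unfolding den_def by (simp add: algebra_simps)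
    finally show ?thesis using denp by simp
  qed
  show ?thesis using s0 s1 t0 t1 eq1 eq2 unfolding D_def by blast
qed

lemma glb_refines:
  fixes D :: "'d channel" and \<epsilon> \<delta> :: real
  assumes ch: "is_channel D" and H: "\<forall>\<alpha>\<in>{0..1}. D \<sqsubseteq>\<^sub>c f_chan (f_eps_delta \<epsilon> \<delta>) \<alpha>"
    and e: "0 \<le> \<epsilon>" and d0: "0 \<le> \<delta>" and d1: "\<delta> \<le> 1"
  shows "D \<sqsubseteq>\<^sub>c C_eps_delta \<epsilon> \<delta>"
proof -
  define P where "P = fst D"
  define Q where "Q = snd D"
  have PP: "prob_space P" and QQ: "prob_space Q" and PQ: "sets Q = sets P"
    using ch by (auto simp: is_channel_def P_def Q_def)
  interpret P: prob_space P by fact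
  interpret Q: prob_space Q by fact
  define k where "k = exp \<epsilon>"
  have k1: "1 \<le> k" unfolding k_def using e by simp
  have kpos: "0 < k" using k1 by simp
  define b where "b = (1 - \<delta>) / (1 + k)"
  have b0: "0 \<le> b" unfolding b_def using d1 k1 by simp
  have Db: "(1 + k) * b = 1 - \<delta>" unfolding b_def using kpos by simp
  have kb0: "0 \<le> k * b" using kpos b0 by simp
  have Db': "b + k * b = 1 - \<delta>" using Db by (simp add: distrib_right)
  have b1: "b \<le> 1" using Db' kb0 d0 by linarith
  have kb: "(1 - \<delta>) * exp \<epsilon> / (1 + exp \<epsilon>) = k * b" "(1 - \<delta>) / (1 + exp \<epsilon>) = b"
    unfolding b_def k_def by simp_all
  define f where "f = f_eps_delta \<epsilon> \<delta>"
  have em: "exp (- \<epsilon>) = 1 / k" unfolding k_def by (simp add: exp_minus field_simps)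
  have f1: "f (1 - \<delta>) = 0"
  proof -
    have "0 \<le> (k - 1) * (1 - \<delta>)" using k1 d1 by simp
    moreover have "(k - 1) * (1 - \<delta>) = k * (1 - \<delta>) - (1 - \<delta>)" by (simp add: algebra_simps)
    ultimately have "1 - \<delta> - k * (1 - \<delta>) \<le> 0" by linarith
    then show ?thesis unfolding f_def f_eps_delta_def k_def[symmetric] by simp
  qed
  have f0: "f 0 = 1 - \<delta>"
  proof -
    have "1 / k \<le> 1" using k1 by simp
    then have "1 / k * (1 - \<delta>) \<le> 1 * (1 - \<delta>)" using d1 by (intro mult_right_mono) auto
    then have "1 / k * (1 - \<delta>) \<le> 1 - \<delta>" by simp
    then show ?thesis unfolding f_def f_eps_delta_def em k_def[symmetric] using d1 by simp
  qed
  have fb: "f b = b"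
  proof -
    have a: "1 - \<delta> - k * b = b" using Db by (simp add: algebra_simps)
    have "1 - \<delta> - b = k * b" using Db' by linarith
    then have c: "1 / k * (1 - \<delta> - b) = b" using kpos by simp
    show ?thesis unfolding f_def f_eps_delta_def em k_def[symmetric] a c using b0 by simp
  qed
  have R1: "D \<sqsubseteq>\<^sub>c mat_channel [\<delta>, 1 - \<delta>] [0, 1]"
    using H[rule_format, of "1 - \<delta>"] d0 d1 f1 by (simp add: f_chan_def f_def)
  have R2: "D \<sqsubseteq>\<^sub>c mat_channel [1, 0] [1 - \<delta>, \<delta>]"
    using H[rule_format, of 0] f0 by (simp add: f_chan_def f_def)
  have R3: "D \<sqsubseteq>\<^sub>c mat_channel [1 - b, b] [b, 1 - b]"
    using H[rule_format, of b] fb b0 b1 by (simp add: f_chan_def f_def)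
  obtain w where wm[measurable]: "w \<in> borel_measurable P" and wmq: "w \<in> borel_measurable Q"
      and w01: "\<And>y. 0 \<le> w y" "\<And>y. w y \<le> 1" and Pw: "integral\<^sup>L P w = \<delta>" and Qw: "integral\<^sup>L Q w = 0"
    using test_from_refines[OF ch R1 d0 order_refl] unfolding P_def Q_def by blast
  obtain vv where vvm[measurable]: "vv \<in> borel_measurable P" and vvmq: "vv \<in> borel_measurable Q"
      and vv01: "\<And>y. 0 \<le> vv y" "\<And>y. vv y \<le> 1" and Pvv: "integral\<^sup>L P vv = 1" and Qvv: "integral\<^sup>L Q vv = 1 - \<delta>"
    using test_from_refines[OF ch R2 zero_le_one] d1 unfolding P_def Q_def by auto
  obtain z where zm[measurable]: "z \<in> borel_measurable P" and zmq: "z \<in> borel_measurable Q"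
      and z01: "\<And>y. 0 \<le> z y" "\<And>y. z y \<le> 1" and Pz: "integral\<^sup>L P z = 1 - b" and Qz: "integral\<^sup>L Q z = b"
    using test_from_refines[OF ch R3 _ b0] b1 unfolding P_def Q_def by auto
  define v where "v = (\<lambda>y. 1 - vv y)"
  have vm[measurable]: "v \<in> borel_measurable P" unfolding v_def by measurable
  have v01: "0 \<le> v y" "v y \<le> 1" for y unfolding v_def using vv01[of y] by auto
  have mPQ: "g \<in> borel_measurable Q" if "g \<in> borel_measurable P" for g
    using that unfolding measurable_cong_sets[OF PQ refl] .
  have intPQ: "integrable P g \<and> integrable Q g" if "g \<in> borel_measurable P" "\<And>y. \<bar>g y\<bar> \<le> 1" for g :: "'d \<Rightarrow> real"
  proof
    show "integrable P g" by (rule P.integrable_const_bound[where B=1]) (use that in auto)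
    show "integrable Q g" by (rule Q.integrable_const_bound[where B=1]) (use that mPQ[OF that(1)] in auto)
  qed
  have iv: "integrable P v" "integrable Q v" using intPQ[OF vm] v01 by (auto simp: abs_le_iff)
  have iw: "integrable P w" "integrable Q w" using intPQ[OF wm] w01 by (auto simp: abs_le_iff)
  have iz: "integrable P z" "integrable Q z" using intPQ[OF zm] z01 by (auto simp: abs_le_iff)
  have Pv: "integral\<^sup>L P v = 0" unfolding v_def using Pvv intPQ[OF vvm] vv01
    by (subst Bochner_Integration.integral_diff) (auto simp: abs_le_iff P.prob_space)
  have Qv: "integral\<^sup>L Q v = \<delta>" unfolding v_def using Qvv intPQ[OF vvm] vv01
    by (subst Bochner_Integration.integral_diff) (auto simp: abs_le_iff Q.prob_space)
  have ii: "integrable P g" "integrable Q g"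
    if "g \<in> borel_measurable P" "\<And>y. 0 \<le> g y" "\<And>y. g y \<le> 1" for g :: "'d \<Rightarrow> real"
    using intPQ[OF that(1)] that(2,3) by (auto simp: abs_le_iff)
  have mono0: "integral\<^sup>L N g = 0" if "integrable N g" "integrable N h" "\<And>y. 0 \<le> g y" "\<And>y. g y \<le> h y"
    "integral\<^sup>L N h = 0" for N :: "'d measure" and g h :: "'d \<Rightarrow> real"
  proof -
    have "integral\<^sup>L N g \<le> integral\<^sup>L N h" using that by (intro integral_mono) auto
    moreover have "0 \<le> integral\<^sup>L N g" using that by (intro Bochner_Integration.integral_nonneg) auto
    ultimately show ?thesis using that by simp
  qed
  have wv01: "0 \<le> w y * v y" "w y * v y \<le> w y" "w y * v y \<le> v y" for y
    using w01[of y] v01[of y] mult_left_le[of "v y" "w y"] mult_left_le_one_le[of "v y" "w y"] by auto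
  have iwv: "integrable P (\<lambda>y. w y * v y)" "integrable Q (\<lambda>y. w y * v y)"
  proof -
    have m: "(\<lambda>y. w y * v y) \<in> borel_measurable P" by measurable
    show "integrable P (\<lambda>y. w y * v y)" "integrable Q (\<lambda>y. w y * v y)"
      using ii[OF m wv01(1) order_trans[OF wv01(2) w01(2)]] by auto
  qed
  have Pwv: "integral\<^sup>L P (\<lambda>y. w y * v y) = 0" by (rule mono0[OF iwv(1) iv(1)]) (use wv01 Pv in auto)
  have Qwv: "integral\<^sup>L Q (\<lambda>y. w y * v y) = 0" by (rule mono0[OF iwv(2) iw(2)]) (use wv01 Qw in auto)
  define w0 where "w0 = (\<lambda>y. w y - w y * v y)"
  define w3 where "w3 = (\<lambda>y. v y - w y * v y)"
  define r where "r = (\<lambda>y. 1 - w0 y - w3 y)"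
  have w0m[measurable]: "w0 \<in> borel_measurable P" unfolding w0_def by measurable
  have w3m[measurable]: "w3 \<in> borel_measurable P" unfolding w3_def by measurable
  have rm[measurable]: "r \<in> borel_measurable P" unfolding r_def by measurable
  have r_alt: "r y = (1 - w y) * (1 - v y) + w y * v y" for y unfolding r_def w0_def w3_def by (simp add: algebra_simps)
  have w001: "0 \<le> w0 y" "w0 y \<le> 1" "0 \<le> w3 y" "w3 y \<le> 1" "0 \<le> r y" "r y \<le> 1" for y
  proof -
    show "0 \<le> w0 y" "0 \<le> w3 y" unfolding w0_def w3_def using wv01[of y] by auto
    show "w0 y \<le> 1" "w3 y \<le> 1" unfolding w0_def w3_def using wv01[of y] w01[of y] v01[of y] by linarith+
    show "0 \<le> r y" unfolding r_alt using w01[of y] v01[of y] by (intro add_nonneg_nonneg mult_nonneg_nonneg) auto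
    show "r y \<le> 1" unfolding r_def using \<open>0 \<le> w0 y\<close> \<open>0 \<le> w3 y\<close> by simp
  qed
  have iw0: "integrable P w0" "integrable Q w0" using ii[OF w0m w001(1) w001(2)] by auto
  have iw3: "integrable P w3" "integrable Q w3" using ii[OF w3m w001(3) w001(4)] by auto
  have ir: "integrable P r" "integrable Q r" using ii[OF rm w001(5) w001(6)] by auto
  have Pw0: "integral\<^sup>L P w0 = \<delta>" unfolding w0_def using iw iwv Pw Pwv by simp
  have Qw0: "integral\<^sup>L Q w0 = 0" unfolding w0_def using iw iwv Qw Qwv by simp
  have Pw3: "integral\<^sup>L P w3 = 0" unfolding w3_def using iv iwv Pv Pwv by simp
  have Qw3: "integral\<^sup>L Q w3 = \<delta>" unfolding w3_def using iv iwv Qv Qwv by simp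
  have Pr: "integral\<^sup>L P r = 1 - \<delta>" unfolding r_def using iw0 iw3 Pw0 Pw3 by (simp add: P.prob_space)
  have Qr: "integral\<^sup>L Q r = 1 - \<delta>" unfolding r_def using iw0 iw3 Qw0 Qw3 by (simp add: Q.prob_space)
  define rz where "rz = (\<lambda>y. r y * z y)"
  have rzm[measurable]: "rz \<in> borel_measurable P" unfolding rz_def by measurable
  have rz01: "0 \<le> rz y" "rz y \<le> r y" for y unfolding rz_def using w001[of y] z01[of y] mult_left_le[of "z y" "r y"] by auto
  have irz: "integrable P rz" "integrable Q rz" using ii[OF rzm rz01(1) order_trans[OF rz01(2) w001(6)]] by auto
  have wz: "0 \<le> w0 y * z y" "w0 y * z y \<le> w0 y" "0 \<le> w3 y * z y" "w3 y * z y \<le> w3 y" for y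
    using w001[of y] z01[of y] mult_left_le[of "z y" "w0 y"] mult_left_le[of "z y" "w3 y"] by auto
  have i0z: "integrable P (\<lambda>y. w0 y * z y)" "integrable Q (\<lambda>y. w0 y * z y)"
  proof -
    have m: "(\<lambda>y. w0 y * z y) \<in> borel_measurable P" by measurable
    show "integrable P (\<lambda>y. w0 y * z y)" "integrable Q (\<lambda>y. w0 y * z y)"
      using ii[OF m wz(1) order_trans[OF wz(2) w001(2)]] by auto
  qed
  have i3z: "integrable P (\<lambda>y. w3 y * z y)" "integrable Q (\<lambda>y. w3 y * z y)"
  proof -
    have m: "(\<lambda>y. w3 y * z y) \<in> borel_measurable P" by measurable
    show "integrable P (\<lambda>y. w3 y * z y)" "integrable Q (\<lambda>y. w3 y * z y)"
      using ii[OF m wz(3) order_trans[OF wz(4) w001(4)]] by auto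
  qed
  have rz_alt: "rz y = z y - w0 y * z y - w3 y * z y" for y unfolding rz_def r_def by (simp add: algebra_simps)
  have P3z: "integral\<^sup>L P (\<lambda>y. w3 y * z y) = 0" by (rule mono0[OF i3z(1) iw3(1)]) (use wz Pw3 in auto)
  have Q0z: "integral\<^sup>L Q (\<lambda>y. w0 y * z y) = 0" by (rule mono0[OF i0z(2) iw0(2)]) (use wz Qw0 in auto)
  have P0z: "integral\<^sup>L P (\<lambda>y. w0 y * z y) \<le> \<delta>" using Pw0 integral_mono[OF i0z(1) iw0(1) wz(2)] by simp
  have Q3z: "0 \<le> integral\<^sup>L Q (\<lambda>y. w3 y * z y)" using wz by (intro Bochner_Integration.integral_nonneg) auto
  define x where "x = integral\<^sup>L P rz"
  define yy where "yy = integral\<^sup>L Q rz"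
  have xe: "x = (1 - b) - integral\<^sup>L P (\<lambda>y. w0 y * z y) - integral\<^sup>L P (\<lambda>y. w3 y * z y)"
    unfolding x_def rz_alt using iz i0z i3z Pz by simp
  have ye: "yy = b - integral\<^sup>L Q (\<lambda>y. w0 y * z y) - integral\<^sup>L Q (\<lambda>y. w3 y * z y)"
    unfolding yy_def rz_alt using iz i0z i3z Qz by simp
  have xb: "k * b \<le> x" using xe P3z P0z Db' by linarith
  have yb: "yy \<le> b" using ye Q0z Q3z by linarith
  have y0: "0 \<le> yy" unfolding yy_def using rz01 by (intro Bochner_Integration.integral_nonneg) auto
  obtain s t where st: "0 \<le> s" "s \<le> 1" "0 \<le> t" "t \<le> 1"
    "s * x + t * ((1 + k) * b - x) = k * b" "s * yy + t * ((1 + k) * b - yy) = b"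
    using st_exists[OF k1 b0 xb y0 yb] by blast
  define w1 where "w1 = (\<lambda>y. s * rz y + t * (r y - rz y))"
  define w2 where "w2 = (\<lambda>y. r y - w1 y)"
  have w1m[measurable]: "w1 \<in> borel_measurable P" unfolding w1_def by measurable
  have w2m[measurable]: "w2 \<in> borel_measurable P" unfolding w2_def by measurable
  have w12: "0 \<le> w1 y" "w1 y \<le> r y" for y
  proof -
    have a: "0 \<le> s * rz y" "s * rz y \<le> rz y" using st rz01[of y] mult_left_le_one_le[of "rz y" s] by auto
    have b: "0 \<le> t * (r y - rz y)" "t * (r y - rz y) \<le> r y - rz y" using st rz01[of y]
      mult_left_le_one_le[of "r y - rz y" t] by auto
    show "0 \<le> w1 y" "w1 y \<le> r y" unfolding w1_def using a b by linarith+
  qed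
  have iw1: "integrable P w1" "integrable Q w1" unfolding w1_def using irz ir by auto
  have iw2: "integrable P w2" "integrable Q w2" unfolding w2_def using iw1 ir by auto
  have Pw1: "integral\<^sup>L P w1 = k * b" unfolding w1_def using irz ir st(5) Pr Db
    by (simp add: x_def)
  have Qw1: "integral\<^sup>L Q w1 = b" unfolding w1_def using irz ir st(6) Qr Db
    by (simp add: yy_def)
  have Pw2: "integral\<^sup>L P w2 = b" unfolding w2_def using iw1 ir Pw1 Pr Db' by simp
  have Qw2: "integral\<^sup>L Q w2 = k * b" unfolding w2_def using iw1 ir Qw1 Qr Db' by simp
  define ws where "ws = [w0, w1, w2, w3]"
  have wsm: "ws!i \<in> borel_measurable P" if "i < length ws" for i
    using that w0m w1m w2m w3m by (auto simp: ws_def less_Suc_eq numeral_eq_Suc)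
  have wsmQ: "ws!i \<in> borel_measurable Q" if "i < length ws" for i using mPQ[OF wsm[OF that]] .
  have wsn: "0 \<le> (ws!i) y" "(ws!i) y \<le> 1" if "i < length ws" for i y
    using that w001[of y] w12[of y] by (auto simp: ws_def less_Suc_eq numeral_eq_Suc w2_def)
  have wss: "(\<Sum>i<length ws. (ws!i) y) = 1" for y
    by (simp add: ws_def numeral_eq_Suc w2_def r_def)
  have spQ: "space Q = space P" using PQ by (rule sets_eq_imp_space_eq)
  have BP: "bind P (\<lambda>y. fin_row (map (\<lambda>w. w y) ws)) = fin_row (map (\<lambda>w. integral\<^sup>L P w) ws)"
    by (rule bind_to_fin_row[OF PP wsm wsn(1) wsn(2) wss])
  have BQ: "bind Q (\<lambda>y. fin_row (map (\<lambda>w. w y) ws)) = fin_row (map (\<lambda>w. integral\<^sup>L Q w) ws)"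
    by (rule bind_to_fin_row[OF QQ wsmQ wsn(1) wsn(2) wss])
  have KM: "(\<lambda>y. fin_row (map (\<lambda>w. w y) ws)) \<in> P \<rightarrow>\<^sub>M prob_algebra (fin_row [\<delta>, k * b, b, 0])"
    by (rule kernel_to_fin_row[OF PP wsm wsn(1) wss])
  show ?thesis
    unfolding refines_def C_eps_delta_def mat_channel_def fst_conv snd_conv kb P_def[symmetric] Q_def[symmetric]
  proof (intro exI conjI)
    show "(\<lambda>y. fin_row (map (\<lambda>w. w y) ws)) \<in> P \<rightarrow>\<^sub>M prob_algebra (fin_row [\<delta>, k * b, b, 0])" by (rule KM)
    show "P \<bind> (\<lambda>y. fin_row (map (\<lambda>w. w y) ws)) = fin_row [\<delta>, k * b, b, 0]"
      unfolding BP by (simp add: ws_def Pw0 Pw1 Pw2 Pw3)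
    show "Q \<bind> (\<lambda>y. fin_row (map (\<lambda>w. w y) ws)) = fin_row [0, b, k * b, \<delta>]"
      unfolding BQ by (simp add: ws_def Qw0 Qw1 Qw2 Qw3)
  qed
qed

lemma f_bounds:
  fixes k \<delta> \<alpha> F :: real
  assumes k: "1 \<le> k" and d0: "0 \<le> \<delta>" and d1: "\<delta> \<le> 1" and a0: "0 \<le> \<alpha>" and a1: "\<alpha> \<le> 1"
    and F: "F = max 0 (max (1 - \<delta> - k * \<alpha>) (1 / k * (1 - \<delta> - \<alpha>)))"
  shows "0 \<le> F" "F \<le> 1" "1 - \<alpha> \<le> k * F + \<delta>" "F \<le> k * (1 - \<alpha>) + \<delta>"
    "\<alpha> \<le> k * (1 - F) + \<delta>" "1 - F \<le> k * \<alpha> + \<delta>"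
proof -
  have kpos: "0 < k" using k by simp
  define A where "A = 1 - \<delta> - k * \<alpha>"
  define X where "X = 1 - \<delta> - \<alpha>"
  define B where "B = 1 / k * X"
  have kB: "k * B = X" unfolding B_def using kpos by simp
  have FA: "A \<le> F" and FB: "B \<le> F" and F0: "0 \<le> F" unfolding F A_def B_def X_def by auto
  have ka: "\<alpha> \<le> k * \<alpha>" using k a0 mult_right_mono[of 1 k \<alpha>] by simp
  have ka0: "0 \<le> k * \<alpha>" using kpos a0 by simp
  have "1 * (k * \<alpha>) \<le> k * (k * \<alpha>)" by (rule mult_right_mono[OF k ka0])
  then have kka: "\<alpha> \<le> k * (k * \<alpha>)" using ka by simp
  have kd: "0 \<le> k * \<delta>" using kpos d0 by simp
  have kF: "k * B \<le> k * F" using FB kpos by simp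
  have cases: "F = 0 \<or> F = A \<or> F = B" unfolding F A_def B_def X_def by (auto simp: max_def)
  show "0 \<le> F" by fact
  show "1 - \<alpha> \<le> k * F + \<delta>" using kF kB d0 unfolding X_def by linarith
  show "1 - F \<le> k * \<alpha> + \<delta>" using FA unfolding A_def by linarith
  have kA: "k * A = k - k * \<delta> - k * (k * \<alpha>)" unfolding A_def by (simp add: algebra_simps)
  have BX: "B \<le> X" if "0 \<le> X"
  proof -
    have "1 / k \<le> 1" using k by simp
    then have "1 / k * X \<le> 1 * X" using that by (intro mult_right_mono) auto
    then show ?thesis unfolding B_def by simp
  qed
  have kam: "k * (1 - \<alpha>) = k - k * \<alpha>" by (simp add: algebra_simps)
  have k1a: "1 - \<alpha> \<le> k * (1 - \<alpha>)" using k a1 mult_right_mono[of 1 k "1 - \<alpha>"] by simp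
  have kF1: "k * (1 - F) = k - k * F" by (simp add: algebra_simps)
  show "F \<le> 1" "F \<le> k * (1 - \<alpha>) + \<delta>" "\<alpha> \<le> k * (1 - F) + \<delta>"
  proof -
    have "F \<le> 1 \<and> F \<le> k * (1 - \<alpha>) + \<delta> \<and> \<alpha> \<le> k * (1 - F) + \<delta>"
    proof (cases "F = 0")
      case True then show ?thesis using k a1 d0 kam ka by (simp add: kF1)
    next
      case False
      then have "F = A \<or> F = B" using cases by auto
      then show ?thesis
      proof
        assume FA': "F = A"
        have e: "k * (1 - A) = k * \<delta> + k * (k * \<alpha>)" by (simp add: A_def algebra_simps)
        have "A \<le> 1" "A \<le> k * (1 - \<alpha>) + \<delta>" "\<alpha> \<le> k * (1 - A) + \<delta>"
          using e ka0 kka kd d0 d1 a0 a1 k kam unfolding A_def by linarith+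
        then show ?thesis unfolding FA' by simp
      next
        assume FB': "F = B"
        then have X0: "0 \<le> X" using F0 kB kpos by (metis mult_nonneg_nonneg less_le)
        have "B \<le> 1" "B \<le> k * (1 - \<alpha>) + \<delta>" "\<alpha> \<le> k * (1 - B) + \<delta>"
          using BX[OF X0] kB k1a d0 d1 a0 a1 k unfolding X_def kF1[of] by (simp_all add: right_diff_distrib)
        then show ?thesis unfolding FB' by simp
      qed
    qed
    then show "F \<le> 1" "F \<le> k * (1 - \<alpha>) + \<delta>" "\<alpha> \<le> k * (1 - F) + \<delta>" by auto
  qed
qed


lemma f_chan_ok:
  fixes \<epsilon> \<delta> \<alpha> :: real
  assumes e: "0 \<le> \<epsilon>" and d0: "0 \<le> \<delta>" and d1: "\<delta> \<le> 1" and a0: "0 \<le> \<alpha>" and a1: "\<alpha> \<le> 1"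
  shows "is_channel (f_chan (f_eps_delta \<epsilon> \<delta>) \<alpha>) \<and> DP \<epsilon> \<delta> (f_chan (f_eps_delta \<epsilon> \<delta>) \<alpha>)"
proof -
  define k where "k = exp \<epsilon>"
  have k: "1 \<le> k" unfolding k_def using e by simp
  define F where "F = f_eps_delta \<epsilon> \<delta> \<alpha>"
  have em: "exp (- \<epsilon>) = 1 / k" unfolding k_def by (simp add: exp_minus field_simps)
  have FF: "F = max 0 (max (1 - \<delta> - k * \<alpha>) (1 / k * (1 - \<delta> - \<alpha>)))"
    unfolding F_def f_eps_delta_def em k_def ..
  note fb = f_bounds[OF k d0 d1 a0 a1 FF]
  have nn2: "0 \<le> [x0, x1] ! i" if "i < length [x0, x1]" "0 \<le> x0" "0 \<le> x1" for i and x0 x1 :: real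
    using that by (auto simp: less_Suc_eq)
  have ps1: "prob_space (fin_row [1 - \<alpha>, \<alpha>])"
    by (rule prob_space_fin_row) (use nn2 a0 a1 in auto)
  have ps2: "prob_space (fin_row [F, 1 - F])"
    by (rule prob_space_fin_row) (use nn2 fb in auto)
  have ch: "is_channel (f_chan (f_eps_delta \<epsilon> \<delta>) \<alpha>)"
    unfolding is_channel_def f_chan_def mat_channel_def F_def[symmetric] using ps1 ps2 by simp
  have m1: "measure (fin_row [1 - \<alpha>, \<alpha>]) S = (1 - \<alpha>) * indicator S 0 + \<alpha> * indicator S 1" for S
    by (subst measure_fin_row) (use nn2 a0 a1 in \<open>auto simp: numeral_eq_Suc\<close>)
  have m2: "measure (fin_row [F, 1 - F]) S = F * indicator S 0 + (1 - F) * indicator S 1" for S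
    by (subst measure_fin_row) (use nn2 fb in \<open>auto simp: numeral_eq_Suc\<close>)
  have kd: "1 \<le> k + \<delta>" using k d0 by simp
  have dp: "DP \<epsilon> \<delta> (f_chan (f_eps_delta \<epsilon> \<delta>) \<alpha>)"
    unfolding DP_def f_chan_def mat_channel_def fst_conv snd_conv F_def[symmetric] k_def[symmetric] m1 m2
  proof
    fix S :: "nat set"
    show "(1 - \<alpha>) * indicator S 0 + \<alpha> * indicator S 1 \<le> k * (F * indicator S 0 + (1 - F) * indicator S 1) + \<delta> \<and>
        F * indicator S 0 + (1 - F) * indicator S 1 \<le> k * ((1 - \<alpha>) * indicator S 0 + \<alpha> * indicator S 1) + \<delta>"
    proof (cases "0 \<in> S"; cases "1 \<in> S")
      assume "0 \<in> S" "1 \<in> S" then show ?thesis using kd by (simp add: algebra_simps)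
    next
      assume "0 \<in> S" "1 \<notin> S" then show ?thesis using fb by simp
    next
      assume "0 \<notin> S" "1 \<in> S" then show ?thesis using fb by simp
    next
      assume "0 \<notin> S" "1 \<notin> S" then show ?thesis using d0 by simp
    qed
  qed
  show ?thesis using ch dp by blast
qed

theorem mainTheorem6:
  fixes \<epsilon> \<delta> :: real
  assumes "\<epsilon> \<ge> 0" and "0 \<le> \<delta>" and "\<delta> \<le> 1"
  shows "(\<forall>\<alpha>\<in>{0..1}. C_eps_delta \<epsilon> \<delta> \<sqsubseteq>\<^sub>c f_chan (f_eps_delta \<epsilon> \<delta>) \<alpha>)
       \<and> (\<forall>D :: 'd channel. is_channel D \<and>
              (\<forall>\<alpha>\<in>{0..1}. D \<sqsubseteq>\<^sub>c f_chan (f_eps_delta \<epsilon> \<delta>) \<alpha>)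
            \<longrightarrow> D \<sqsubseteq>\<^sub>c C_eps_delta \<epsilon> \<delta>)
       \<and> (\<forall>M :: 'b channel. is_channel M \<longrightarrow> (DP \<epsilon> \<delta> M \<longleftrightarrow> C_eps_delta \<epsilon> \<delta> \<sqsubseteq>\<^sub>c M))"
proof (intro conjI ballI allI impI)
  fix \<alpha> :: real assume "\<alpha> \<in> {0..1}"
  then have "is_channel (f_chan (f_eps_delta \<epsilon> \<delta>) \<alpha>) \<and> DP \<epsilon> \<delta> (f_chan (f_eps_delta \<epsilon> \<delta>) \<alpha>)"
    using f_chan_ok[OF assms] by auto
  then show "C_eps_delta \<epsilon> \<delta> \<sqsubseteq>\<^sub>c f_chan (f_eps_delta \<epsilon> \<delta>) \<alpha>"
    using dp_refines[OF _ _ assms] by blast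
next
  fix D :: "'d channel"
  assume "is_channel D \<and> (\<forall>\<alpha>\<in>{0..1}. D \<sqsubseteq>\<^sub>c f_chan (f_eps_delta \<epsilon> \<delta>) \<alpha>)"
  then show "D \<sqsubseteq>\<^sub>c C_eps_delta \<epsilon> \<delta>" using glb_refines[OF _ _ assms] by blast
next
  fix M :: "'b channel"
  assume "is_channel M"
  then show "DP \<epsilon> \<delta> M \<longleftrightarrow> C_eps_delta \<epsilon> \<delta> \<sqsubseteq>\<^sub>c M"
    using dp_refines[OF _ _ assms] refines_dp[OF _ _ assms] by blast
qed

end
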